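(* Let $\tilde\eta=(\tilde\eta_1,\ldots,\tilde\eta_\kappa)$ be any linear-plus-noise signaling rule with signals $\tilde{\mathbf{s}}_k=\tilde\eta_k(\mathbf{y}_{1:k})=\tilde L_k'\mathbf{y}_{1:k}+\tilde{\boldsymbol{\vartheta}}_k\in\mathbb{R}^{nk}$ ($\tilde L_k\in\mathbb{R}^{nk\times nk}$, $\tilde{\boldsymbol{\vartheta}}_k$ zero-mean Gaussian independent of everything else). Define the signaling rule $\eta$ with $m$-dimensional signals by $\eta_k(\mathbf{y}_{1:k}):=\mathbb{E}\{\mathbf{x}^o_k\mid\tilde\eta_1(\mathbf{y}_1),\ldots,\tilde\eta_k(\mathbf{y}_{1:k})\}$, $k\ge1$. Then $\eta$ and $\tilde\eta$ induce, for every type $\omega\in\Omega^o$, the same best-response control inputs almost surely, and hence the same cost $U_S$ for the sensor.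
   Context: Setting with imperfect measurements: state $\mathbf{x}_{k+1}=A\mathbf{x}_k+B\mathbf{u}_k+\mathbf{w}_k$, measurements $\mathbf{y}_k=C\mathbf{x}_k+\mathbf{v}_k\in\mathbb{R}^n$, $k=1,\ldots,\kappa$, with $A\in\mathbb{R}^{m\times m}$, $B\in\mathbb{R}^{m\times r}$, $C\in\mathbb{R}^{n\times m}$, $\mathbf{x}_1\sim\mathcal{N}(0,\Sigma_1)$, $\mathbf{w}_k\sim\mathcal{N}(0,\Sigma_w)$, $\mathbf{v}_k\sim\mathcal{N}(0,\Sigma_v)$, all mutually independent and white. $\mathbf{y}_{1:k}=[\mathbf{y}_k'\cdots\mathbf{y}_1']'$. A signaling rule maps $\mathbf{y}_{1:k}$ to a signal $\mathbf{s}_k$; the follower's control is $\mathbf{u}_k=\gamma_k(\mathbf{s}_{1:k})$ with $\gamma_k$ Borel measurable. Finite type set $\Omega$, $\Omega^o=\Omega\cup\{\omega_o\}$, weights $Q^{\omega}\in\mathbb{S}^m_+$, $R^{\omega}\in\mathbb{S}^r_{++}$. Type-$\omega$ cost $U_C^{\omega}(\eta,\gamma)=\sum_{k=1}^{\kappa}\mathbb{E}\|\mathbf{x}^{\omega}_{k+1}\|^2_{Q^{\omega}}+\mathbb{E}\|\mathbf{u}^{\omega}_k\|^2_{R^{\omega}}$ ($\|z\|_M^2=z'Mz$); type $\omega$ plays a best response minimizing it. Sensor cost $U_S=\max_{p\in\Delta(\Omega^o)}\{\sum_{\omega\in\Omega}p_{\omega}\sum_k\mathbb{E}\|\mathbf{x}^{\omega}_{k+1}\|^2_{Q^{\omega_o}}+p_{\omega_o}\sum_k(\mathbb{E}\|\mathbf{x}^{\omega_o}_{k+1}\|^2_{Q^{\omega_o}}+\mathbb{E}\|\mathbf{u}^{\omega_o}_k\|^2_{R^{\omega_o}})\}$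 evaluated under the best responses, $\Delta(\Omega^o)$ the probability simplex. Control-free state $\mathbf{x}^o_{k+1}=A\mathbf{x}^o_k+\mathbf{w}_k$, $\mathbf{x}^o_1=\mathbf{x}_1$. *)

theory Defs
  imports "HOL-Probability.Probability"
begin

definition psd_mat :: "real^'m^'m \<Rightarrow> bool" where
  "psd_mat Q \<longleftrightarrow> transpose Q = Q \<and> (\<forall>z. 0 \<le> z \<bullet> (Q *v z))"

definition pd_mat :: "real^'m^'m \<Rightarrow> bool" where
  "pd_mat Q \<longleftrightarrow> transpose Q = Q \<and> (\<forall>z. z \<noteq> 0 \<longrightarrow> 0 < z \<bullet> (Q *v z))"

definition qf :: "real^'m^'m \<Rightarrow> real^'m \<Rightarrow> real" where
  "qf Q z = z \<bullet> (Q *v z)"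

definition centered_normal_rv :: "'a measure \<Rightarrow> ('a \<Rightarrow> real) \<Rightarrow> bool" where
  "centered_normal_rv M X \<longleftrightarrow> X \<in> borel_measurable M \<and>
     (distr M borel X = return borel 0 \<or>
      (\<exists>\<sigma>>0. distr M borel X = density lborel (normal_density 0 \<sigma>)))"

definition centered_gaussian_vec :: "'a measure \<Rightarrow> ('a \<Rightarrow> real^'d) \<Rightarrow> bool" where
  "centered_gaussian_vec M X \<longleftrightarrow> (\<forall>c. centered_normal_rv M (\<lambda>\<omega>. c \<bullet> X \<omega>))"

text \<open>Covariance matrix of a zero-mean random vector.\<close>
definition has_cov :: "'a measure \<Rightarrow> ('a \<Rightarrow> real^'d) \<Rightarrow> real^'d^'d \<Rightarrow> bool" where
  "has_cov M X S \<longleftrightarrow> (\<forall>i j. integral\<^sup>L M (\<lambda>\<omega>. X \<omega> $ i * X \<omega> $ j) = S $ i $ j)"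

text \<open>Block vectors in R^{nk}: blocks indexed by 1..k, everything else masked to 0.\<close>
definition mask_blocks :: "nat \<Rightarrow> (nat \<Rightarrow> real^'n) \<Rightarrow> nat \<Rightarrow> real^'n" where
  "mask_blocks k z = (\<lambda>i. if 1 \<le> i \<and> i \<le> k then z i else 0)"

definition centered_gaussian_block :: "'a measure \<Rightarrow> nat \<Rightarrow> ('a \<Rightarrow> nat \<Rightarrow> real^'n) \<Rightarrow> bool" where
  "centered_gaussian_block M k T \<longleftrightarrow>
     (\<forall>c::nat \<Rightarrow> real^'n. centered_normal_rv M (\<lambda>\<omega>. \<Sum>i\<in>{1..k}. c i \<bullet> T \<omega> i))"

datatype prim = PX1 | PW nat | PV nat | PT nat

definition prim_sets ::
  "'a measure \<Rightarrow> ('a \<Rightarrow> real^'m) \<Rightarrow> (nat \<Rightarrow> 'a \<Rightarrow> real^'m) \<Rightarrow> (nat \<Rightarrow> 'a \<Rightarrow> real^'n)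
   \<Rightarrow> (nat \<Rightarrow> 'a \<Rightarrow> nat \<Rightarrow> real^'n) \<Rightarrow> prim \<Rightarrow> 'a set set" where
  "prim_sets M x1 w v \<theta> p = (case p of
      PX1 \<Rightarrow> {x1 -` B \<inter> space M | B. B \<in> sets borel}
    | PW k \<Rightarrow> {w k -` B \<inter> space M | B. B \<in> sets borel}
    | PV k \<Rightarrow> {v k -` B \<inter> space M | B. B \<in> sets borel}
    | PT k \<Rightarrow> {(\<lambda>\<omega>. mask_blocks k (\<theta> k \<omega>)) -` B \<inter> space M | B. B \<in> sets (PiM UNIV (\<lambda>_. borel))})"

definition ymeas :: "real^'m^'n \<Rightarrow> (nat \<Rightarrow> 'a \<Rightarrow> real^'n) \<Rightarrow> (nat \<Rightarrow> real^'m) \<Rightarrow> 'a \<Rightarrow> nat \<Rightarrow> nat \<Rightarrow> real^'n" where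
  "ymeas C v xh \<omega> k = (\<lambda>i. if 1 \<le> i \<and> i \<le> k then C *v xh i + v i \<omega> else 0)"

text \<open>A (possibly randomized) signaling rule sig: sig k y_{1:k} \<omega> is the signal s_k.
  Signal history s_{1:k} (entries outside 1..k carry no information).\<close>
definition shist :: "(nat \<Rightarrow> (nat \<Rightarrow> real^'n) \<Rightarrow> 'a \<Rightarrow> 's) \<Rightarrow> real^'m^'n \<Rightarrow> (nat \<Rightarrow> 'a \<Rightarrow> real^'n)
    \<Rightarrow> (nat \<Rightarrow> real^'m) \<Rightarrow> 'a \<Rightarrow> nat \<Rightarrow> nat \<Rightarrow> 's" where
  "shist sig C v xh \<omega> k = (\<lambda>j. if 1 \<le> j \<and> j \<le> k then sig j (ymeas C v xh \<omega> j) \<omega> else undefined)"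

definition ctrl :: "(nat \<Rightarrow> (nat \<Rightarrow> 's) \<Rightarrow> real^'r) \<Rightarrow> (nat \<Rightarrow> (nat \<Rightarrow> real^'n) \<Rightarrow> 'a \<Rightarrow> 's)
    \<Rightarrow> real^'m^'n \<Rightarrow> (nat \<Rightarrow> 'a \<Rightarrow> real^'n) \<Rightarrow> (nat \<Rightarrow> real^'m) \<Rightarrow> 'a \<Rightarrow> nat \<Rightarrow> real^'r" where
  "ctrl \<gamma> sig C v xh \<omega> k = \<gamma> k (shist sig C v xh \<omega> k)"

fun xhist :: "real^'m^'m \<Rightarrow> real^'r^'m \<Rightarrow> real^'m^'n \<Rightarrow> ('a \<Rightarrow> real^'m) \<Rightarrow> (nat \<Rightarrow> 'a \<Rightarrow> real^'m)
    \<Rightarrow> (nat \<Rightarrow> 'a \<Rightarrow> real^'n) \<Rightarrow> (nat \<Rightarrow> (nat \<Rightarrow> real^'n) \<Rightarrow> 'a \<Rightarrow> 's)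
    \<Rightarrow> (nat \<Rightarrow> (nat \<Rightarrow> 's) \<Rightarrow> real^'r) \<Rightarrow> nat \<Rightarrow> 'a \<Rightarrow> nat \<Rightarrow> real^'m" where
  "xhist A B C x1 w v sig \<gamma> 0 \<omega> = (\<lambda>_. 0)"
| "xhist A B C x1 w v sig \<gamma> (Suc k) \<omega> =
     (let h = xhist A B C x1 w v sig \<gamma> k \<omega> in
      h(Suc k := (if k = 0 then x1 \<omega> else A *v h k + B *v ctrl \<gamma> sig C v h \<omega> k + w k \<omega>)))"

definition state :: "real^'m^'m \<Rightarrow> real^'r^'m \<Rightarrow> real^'m^'n \<Rightarrow> ('a \<Rightarrow> real^'m) \<Rightarrow> (nat \<Rightarrow> 'a \<Rightarrow> real^'m)
    \<Rightarrow> (nat \<Rightarrow> 'a \<Rightarrow> real^'n) \<Rightarrow> (nat \<Rightarrow> (nat \<Rightarrow> real^'n) \<Rightarrow> 'a \<Rightarrow> 's)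
    \<Rightarrow> (nat \<Rightarrow> (nat \<Rightarrow> 's) \<Rightarrow> real^'r) \<Rightarrow> nat \<Rightarrow> 'a \<Rightarrow> real^'m" where
  "state A B C x1 w v sig \<gamma> k \<omega> = xhist A B C x1 w v sig \<gamma> k \<omega> k"

definition control :: "real^'m^'m \<Rightarrow> real^'r^'m \<Rightarrow> real^'m^'n \<Rightarrow> ('a \<Rightarrow> real^'m) \<Rightarrow> (nat \<Rightarrow> 'a \<Rightarrow> real^'m)
    \<Rightarrow> (nat \<Rightarrow> 'a \<Rightarrow> real^'n) \<Rightarrow> (nat \<Rightarrow> (nat \<Rightarrow> real^'n) \<Rightarrow> 'a \<Rightarrow> 's)
    \<Rightarrow> (nat \<Rightarrow> (nat \<Rightarrow> 's) \<Rightarrow> real^'r) \<Rightarrow> nat \<Rightarrow> 'a \<Rightarrow> real^'r" where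
  "control A B C x1 w v sig \<gamma> k \<omega> = ctrl \<gamma> sig C v (xhist A B C x1 w v sig \<gamma> k \<omega>) \<omega> k"

definition state_cost :: "'a measure \<Rightarrow> real^'m^'m \<Rightarrow> real^'r^'m \<Rightarrow> real^'m^'n \<Rightarrow> ('a \<Rightarrow> real^'m)
    \<Rightarrow> (nat \<Rightarrow> 'a \<Rightarrow> real^'m) \<Rightarrow> (nat \<Rightarrow> 'a \<Rightarrow> real^'n) \<Rightarrow> nat
    \<Rightarrow> (nat \<Rightarrow> (nat \<Rightarrow> real^'n) \<Rightarrow> 'a \<Rightarrow> 's) \<Rightarrow> real^'m^'m
    \<Rightarrow> (nat \<Rightarrow> (nat \<Rightarrow> 's) \<Rightarrow> real^'r) \<Rightarrow> ennreal" where
  "state_cost M A B C x1 w v \<kappa> sig Q \<gamma> =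
     (\<Sum>k\<in>{1..\<kappa>}. \<integral>\<^sup>+\<omega>. ennreal (qf Q (state A B C x1 w v sig \<gamma> (k + 1) \<omega>)) \<partial>M)"

definition control_cost :: "'a measure \<Rightarrow> real^'m^'m \<Rightarrow> real^'r^'m \<Rightarrow> real^'m^'n \<Rightarrow> ('a \<Rightarrow> real^'m)
    \<Rightarrow> (nat \<Rightarrow> 'a \<Rightarrow> real^'m) \<Rightarrow> (nat \<Rightarrow> 'a \<Rightarrow> real^'n) \<Rightarrow> nat
    \<Rightarrow> (nat \<Rightarrow> (nat \<Rightarrow> real^'n) \<Rightarrow> 'a \<Rightarrow> 's) \<Rightarrow> real^'r^'r
    \<Rightarrow> (nat \<Rightarrow> (nat \<Rightarrow> 's) \<Rightarrow> real^'r) \<Rightarrow> ennreal" where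
  "control_cost M A B C x1 w v \<kappa> sig R \<gamma> =
     (\<Sum>k\<in>{1..\<kappa>}. \<integral>\<^sup>+\<omega>. ennreal (qf R (control A B C x1 w v sig \<gamma> k \<omega>)) \<partial>M)"

definition UC :: "'a measure \<Rightarrow> real^'m^'m \<Rightarrow> real^'r^'m \<Rightarrow> real^'m^'n \<Rightarrow> ('a \<Rightarrow> real^'m)
    \<Rightarrow> (nat \<Rightarrow> 'a \<Rightarrow> real^'m) \<Rightarrow> (nat \<Rightarrow> 'a \<Rightarrow> real^'n) \<Rightarrow> nat
    \<Rightarrow> (nat \<Rightarrow> (nat \<Rightarrow> real^'n) \<Rightarrow> 'a \<Rightarrow> 's) \<Rightarrow> real^'m^'m \<Rightarrow> real^'r^'r
    \<Rightarrow> (nat \<Rightarrow> (nat \<Rightarrow> 's) \<Rightarrow> real^'r) \<Rightarrow> ennreal" where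
  "UC M A B C x1 w v \<kappa> sig Q R \<gamma> =
     state_cost M A B C x1 w v \<kappa> sig Q \<gamma> + control_cost M A B C x1 w v \<kappa> sig R \<gamma>"

definition admissible :: "'s measure \<Rightarrow> nat \<Rightarrow> (nat \<Rightarrow> (nat \<Rightarrow> 's) \<Rightarrow> real^'r) \<Rightarrow> bool" where
  "admissible S \<kappa> \<gamma> \<longleftrightarrow> (\<forall>k\<in>{1..\<kappa>}. \<gamma> k \<in> measurable (PiM UNIV (\<lambda>_. S)) borel)"

definition best_response :: "'a measure \<Rightarrow> real^'m^'m \<Rightarrow> real^'r^'m \<Rightarrow> real^'m^'n \<Rightarrow> ('a \<Rightarrow> real^'m)
    \<Rightarrow> (nat \<Rightarrow> 'a \<Rightarrow> real^'m) \<Rightarrow> (nat \<Rightarrow> 'a \<Rightarrow> real^'n) \<Rightarrow> nat \<Rightarrow> 's measure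
    \<Rightarrow> (nat \<Rightarrow> (nat \<Rightarrow> real^'n) \<Rightarrow> 'a \<Rightarrow> 's) \<Rightarrow> real^'m^'m \<Rightarrow> real^'r^'r
    \<Rightarrow> (nat \<Rightarrow> (nat \<Rightarrow> 's) \<Rightarrow> real^'r) \<Rightarrow> bool" where
  "best_response M A B C x1 w v \<kappa> S sig Q R \<gamma> \<longleftrightarrow> admissible S \<kappa> \<gamma> \<and>
     (\<forall>\<gamma>'. admissible S \<kappa> \<gamma>' \<longrightarrow>
        UC M A B C x1 w v \<kappa> sig Q R \<gamma> \<le> UC M A B C x1 w v \<kappa> sig Q R \<gamma>')"

text \<open>Sensor cost U_S for a family of follower policies Gam (one per type), types Om, extra type wo.\<close>
definition US :: "'a measure \<Rightarrow> real^'m^'m \<Rightarrow> real^'r^'m \<Rightarrow> real^'m^'n \<Rightarrow> ('a \<Rightarrow> real^'m)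
    \<Rightarrow> (nat \<Rightarrow> 'a \<Rightarrow> real^'m) \<Rightarrow> (nat \<Rightarrow> 'a \<Rightarrow> real^'n) \<Rightarrow> nat
    \<Rightarrow> (nat \<Rightarrow> (nat \<Rightarrow> real^'n) \<Rightarrow> 'a \<Rightarrow> 's) \<Rightarrow> 't set \<Rightarrow> 't
    \<Rightarrow> ('t \<Rightarrow> real^'m^'m) \<Rightarrow> ('t \<Rightarrow> real^'r^'r)
    \<Rightarrow> ('t \<Rightarrow> nat \<Rightarrow> (nat \<Rightarrow> 's) \<Rightarrow> real^'r) \<Rightarrow> ennreal" where
  "US M A B C x1 w v \<kappa> sig Om wo Q R Gam =
     (SUP p \<in> {p :: 't \<Rightarrow> real. (\<forall>t\<in>insert wo Om. 0 \<le> p t) \<and> sum p (insert wo Om) = 1}.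
        (\<Sum>t\<in>Om. ennreal (p t) * state_cost M A B C x1 w v \<kappa> sig (Q wo) (Gam t))
        + ennreal (p wo) * UC M A B C x1 w v \<kappa> sig (Q wo) (R wo) (Gam wo))"

definition sigLN :: "(nat \<Rightarrow> nat \<Rightarrow> nat \<Rightarrow> real^'n^'n) \<Rightarrow> (nat \<Rightarrow> 'a \<Rightarrow> nat \<Rightarrow> real^'n)
    \<Rightarrow> nat \<Rightarrow> (nat \<Rightarrow> real^'n) \<Rightarrow> 'a \<Rightarrow> nat \<Rightarrow> real^'n" where
  "sigLN Lt \<theta> k yh \<omega> = (\<lambda>i. if 1 \<le> i \<and> i \<le> k then (\<Sum>j\<in>{1..k}. Lt k i j *v yh j) + \<theta> k \<omega> i else 0)"

fun xfree :: "real^'m^'m \<Rightarrow> ('a \<Rightarrow> real^'m) \<Rightarrow> (nat \<Rightarrow> 'a \<Rightarrow> real^'m) \<Rightarrow> nat \<Rightarrow> 'a \<Rightarrow> real^'m" where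
  "xfree A x1 w 0 \<omega> = x1 \<omega>"
| "xfree A x1 w (Suc k) \<omega> = (if k = 0 then x1 \<omega> else A *v xfree A x1 w k \<omega> + w k \<omega>)"

definition sfree :: "real^'m^'m \<Rightarrow> real^'m^'n \<Rightarrow> ('a \<Rightarrow> real^'m) \<Rightarrow> (nat \<Rightarrow> 'a \<Rightarrow> real^'m)
    \<Rightarrow> (nat \<Rightarrow> 'a \<Rightarrow> real^'n) \<Rightarrow> (nat \<Rightarrow> nat \<Rightarrow> nat \<Rightarrow> real^'n^'n) \<Rightarrow> (nat \<Rightarrow> 'a \<Rightarrow> nat \<Rightarrow> real^'n)
    \<Rightarrow> nat \<Rightarrow> 'a \<Rightarrow> nat \<Rightarrow> real^'n" where
  "sfree A C x1 w v Lt \<theta> k \<omega> =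
     sigLN Lt \<theta> k (\<lambda>i. if 1 \<le> i \<and> i \<le> k then C *v xfree A x1 w i \<omega> + v i \<omega> else 0) \<omega>"

definition sig_gen :: "'a measure \<Rightarrow> real^'m^'m \<Rightarrow> real^'m^'n \<Rightarrow> ('a \<Rightarrow> real^'m) \<Rightarrow> (nat \<Rightarrow> 'a \<Rightarrow> real^'m)
    \<Rightarrow> (nat \<Rightarrow> 'a \<Rightarrow> real^'n) \<Rightarrow> (nat \<Rightarrow> nat \<Rightarrow> nat \<Rightarrow> real^'n^'n) \<Rightarrow> (nat \<Rightarrow> 'a \<Rightarrow> nat \<Rightarrow> real^'n)
    \<Rightarrow> nat \<Rightarrow> 'a measure" where
  "sig_gen M A C x1 w v Lt \<theta> k = sigma (space M)
     (\<Union>j\<in>{1..k}. (\<lambda>B. sfree A C x1 w v Lt \<theta> j -` B \<inter> space M) ` sets (PiM UNIV (\<lambda>_. borel)))"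

text \<open>The derived rule eta: eta_k = sum_{j\<le>k} sum_{i\<le>j} Kc k j i (block i of s~_j),
  a linear function of s~_{1:k} (with Kc chosen so that it is E{x^o_k | s~_{1:k}}).\<close>
definition sigK :: "(nat \<Rightarrow> nat \<Rightarrow> nat \<Rightarrow> real^'n^'m) \<Rightarrow> (nat \<Rightarrow> nat \<Rightarrow> nat \<Rightarrow> real^'n^'n)
    \<Rightarrow> (nat \<Rightarrow> 'a \<Rightarrow> nat \<Rightarrow> real^'n) \<Rightarrow> nat \<Rightarrow> (nat \<Rightarrow> real^'n) \<Rightarrow> 'a \<Rightarrow> real^'m" where
  "sigK Kc Lt \<theta> k yh \<omega> = (\<Sum>j\<in>{1..k}. \<Sum>i\<in>{1..j}. Kc k j i *v sigLN Lt \<theta> j yh \<omega> i)"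

end

theory Submission
  imports Defs
begin

section \<open>Generic vector measurability\<close>

lemma vec_nth_meas[measurable (raw)]:
  fixes f :: "'a \<Rightarrow> real^'n"
  assumes "f \<in> borel_measurable M"
  shows "(\<lambda>x. f x $ i) \<in> borel_measurable M"
  apply (rule borel_measurable_continuous_on[OF _ assms])
  by (intro continuous_intros)

lemma mv_meas[measurable (raw)]:
  fixes f :: "'a \<Rightarrow> real^'n"
  assumes "f \<in> borel_measurable M"
  shows "(\<lambda>x. (A::real^'n^'m) *v f x) \<in> borel_measurable M"
  apply (rule borel_measurable_continuous_on[OF _ assms])
  by (intro linear_continuous_on matrix_vector_mul_bounded_linear)

lemma vec_meas_iff:
  fixes f :: "'a \<Rightarrow> real^'n"
  shows "f \<in> borel_measurable M \<longleftrightarrow> (\<forall>i. (\<lambda>x. f x $ i) \<in> borel_measurable M)"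
proof
  assume a: "\<forall>i. (\<lambda>x. f x $ i) \<in> borel_measurable M"
  show "f \<in> borel_measurable M"
  proof (rule borel_measurable_euclidean_space[THEN iffD2], intro ballI)
    fix b :: "real^'n" assume "b \<in> Basis"
    then obtain i where "b = axis i 1" unfolding Basis_vec_def Basis_real_def by blast
    then show "(\<lambda>x. f x \<bullet> b) \<in> borel_measurable M" using a by (simp add: inner_axis)
  qed
next
  assume "f \<in> borel_measurable M" then show "\<forall>i. (\<lambda>x. f x $ i) \<in> borel_measurable M"
    by (auto intro!: borel_measurable_continuous_on continuous_intros)
qed

section \<open>Square integrable functions\<close>

context prob_space
begin

definition sqi :: "('a \<Rightarrow> real) \<Rightarrow> bool" where
  "sqi f \<longleftrightarrow> f \<in> borel_measurable M \<and> integrable M (\<lambda>x. (f x)\<^sup>2)"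

lemma sqi_meas: "sqi f \<Longrightarrow> f \<in> borel_measurable M"
  by (simp add: sqi_def)

lemma sqi_mult: assumes "sqi f" "sqi g" shows "integrable M (\<lambda>x. f x * g x)"
proof (rule Bochner_Integration.integrable_bound)
  show "integrable M (\<lambda>x. (f x)\<^sup>2 + (g x)\<^sup>2)" using assms by (simp add: sqi_def)
  show "(\<lambda>x. f x * g x) \<in> borel_measurable M" using assms by (simp add: sqi_def borel_measurable_times)
  show "AE x in M. norm (f x * g x) \<le> norm ((f x)\<^sup>2 + (g x)\<^sup>2)"
  proof (rule AE_I2)
    fix x
    have "0 \<le> (\<bar>f x\<bar> - \<bar>g x\<bar>)\<^sup>2" by simp
    then have "2 * \<bar>f x * g x\<bar> \<le> (f x)\<^sup>2 + (g x)\<^sup>2"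
      unfolding power2_diff by (simp add: abs_mult)
    then show "norm (f x * g x) \<le> norm ((f x)\<^sup>2 + (g x)\<^sup>2)" by simp
  qed
qed

lemma sqi_const[simp]: "sqi (\<lambda>x. c)"
  by (simp add: sqi_def)

lemma sqi_integrable: "sqi f \<Longrightarrow> integrable M f"
  using sqi_mult[of f "\<lambda>x. 1"] by simp

lemma sqi_add: assumes "sqi f" "sqi g" shows "sqi (\<lambda>x. f x + g x)"
proof -
  have "integrable M (\<lambda>x. (f x)\<^sup>2 + (g x)\<^sup>2 + 2 * (f x * g x))"
    using assms sqi_mult[OF assms] by (simp add: sqi_def)
  moreover have "(\<lambda>x. (f x + g x)\<^sup>2) = (\<lambda>x. (f x)\<^sup>2 + (g x)\<^sup>2 + 2 * (f x * g x))"
    by (simp add: power2_sum algebra_simps)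
  ultimately show ?thesis using assms by (simp add: sqi_def borel_measurable_add)
qed

lemma sqi_scale: assumes "sqi f" shows "sqi (\<lambda>x. c * f x)"
  using assms by (simp add: sqi_def power_mult_distrib borel_measurable_times)

lemma sqi_uminus: assumes "sqi f" shows "sqi (\<lambda>x. - f x)"
  using sqi_scale[OF assms, of "-1"] by simp

lemma sqi_diff: assumes "sqi f" "sqi g" shows "sqi (\<lambda>x. f x - g x)"
  using sqi_add[OF assms(1) sqi_uminus[OF assms(2)]] by simp

lemma sqi_sum: assumes "\<And>i. i \<in> I \<Longrightarrow> sqi (f i)" shows "sqi (\<lambda>x. \<Sum>i\<in>I. f i x)"
  using assms
proof (induction I rule: infinite_finite_induct)
  case (insert a F) then show ?case by (simp add: sqi_add)
qed simp_all

definition vsqi :: "('a \<Rightarrow> real^'n) \<Rightarrow> bool" where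
  "vsqi X \<longleftrightarrow> (\<forall>i. sqi (\<lambda>x. X x $ i))"

lemma vsqi_meas: "vsqi X \<Longrightarrow> X \<in> borel_measurable M"
  by (simp add: vsqi_def vec_meas_iff sqi_def)

lemma vsqi_add: "vsqi X \<Longrightarrow> vsqi Y \<Longrightarrow> vsqi (\<lambda>x. X x + Y x)"
  by (simp add: vsqi_def sqi_add)

lemma vsqi_diff: "vsqi X \<Longrightarrow> vsqi Y \<Longrightarrow> vsqi (\<lambda>x. X x - Y x)"
  by (simp add: vsqi_def sqi_diff)

lemma vsqi_uminus: "vsqi X \<Longrightarrow> vsqi (\<lambda>x. - X x)"
  by (simp add: vsqi_def sqi_uminus)

lemma vsqi_const[simp]: "vsqi (\<lambda>x. c)"
  by (simp add: vsqi_def)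

lemma vsqi_sum: assumes "\<And>i. i \<in> I \<Longrightarrow> vsqi (f i)" shows "vsqi (\<lambda>x. \<Sum>i\<in>I. f i x)"
  using assms unfolding vsqi_def by (auto simp: sum_component intro!: sqi_sum)

lemma vsqi_mv: assumes "vsqi X" shows "vsqi (\<lambda>x. (N::real^'n^'m) *v X x)"
  using assms unfolding vsqi_def matrix_vector_mult_def
  by (auto intro!: sqi_sum sqi_scale)

lemma inner_vec_sum: "(x::real^'n) \<bullet> y = (\<Sum>i\<in>UNIV. x $ i * y $ i)"
  by (simp add: inner_vec_def)

lemma vsqi_inner_integrable: assumes "vsqi X" "vsqi Y" shows "integrable M (\<lambda>x. X x \<bullet> Y x)"
  using assms unfolding vsqi_def inner_vec_sum by (auto intro!: sqi_mult)

lemma vsqi_inner_integral: assumes "vsqi X" "vsqi Y"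
  shows "(\<integral>x. X x \<bullet> Y x \<partial>M) = (\<Sum>i\<in>UNIV. \<integral>x. X x $ i * Y x $ i \<partial>M)"
  using assms unfolding vsqi_def inner_vec_sum by (auto intro!: Bochner_Integration.integral_sum sqi_mult)

lemma vsqi_qf_integrable: assumes "vsqi X" shows "integrable M (\<lambda>x. qf N (X x))"
  unfolding qf_def by (intro vsqi_inner_integrable assms vsqi_mv)

lemma centered_normal_sqi:
  assumes "centered_normal_rv M f"
  shows "sqi f" "integral\<^sup>L M f = 0"
proof -
  have fm[measurable]: "f \<in> borel_measurable M" using assms by (simp add: centered_normal_rv_def)
  have "integrable (distr M borel f) (\<lambda>y. y\<^sup>2) \<and> integral\<^sup>L (distr M borel f) (\<lambda>y. y) = 0"
  proof (cases "distr M borel f = return borel 0")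
    case True
    show ?thesis unfolding True
      by (simp add: integrable_iff_bounded nn_integral_return integral_return)
  next
    case False
    then obtain \<sigma> where s: "\<sigma> > 0" and d: "distr M borel f = density lborel (normal_density 0 \<sigma>)"
      using assms by (auto simp: centered_normal_rv_def)
    have "integrable lborel (\<lambda>x. normal_density 0 \<sigma> x * (x - 0)^2)"
      by (rule integrable_normal_moment[OF s])
    moreover have "integral\<^sup>L lborel (\<lambda>x. normal_density 0 \<sigma> x * x) = 0"
      by (rule integral_normal_moment_nz_1[OF s])
    ultimately show ?thesis unfolding d
      by (simp add: integrable_density integral_density)
  qed
  then show "sqi f" "integral\<^sup>L M f = 0"
    by (simp_all add: sqi_def integrable_distr_eq integral_distr)
qed

end


section \<open>Closed-loop algebra\<close>

fun cp :: "real^'m^'m \<Rightarrow> real^'r^'m \<Rightarrow> nat \<Rightarrow> (nat \<Rightarrow> real^'r) \<Rightarrow> real^'m" where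
  "cp A B 0 u = 0"
| "cp A B (Suc k) u = (if k = 0 then 0 else A *v cp A B k u + B *v u k)"

lemma cp_cong: "(\<And>j. j < k \<Longrightarrow> u j = u' j) \<Longrightarrow> cp A B k u = cp A B k u'"
  by (induction k) auto

lemma xhist_gt: "k < i \<Longrightarrow> xhist A B C x1 w v sig \<gamma> k \<omega> i = 0"
  by (induction k) (auto simp: Let_def)

lemma xhist_0: "xhist A B C x1 w v sig \<gamma> k \<omega> 0 = 0"
  by (induction k) (auto simp: Let_def)

lemma xhist_upto: "i \<le> k \<Longrightarrow> xhist A B C x1 w v sig \<gamma> k \<omega> i = xhist A B C x1 w v sig \<gamma> i \<omega> i"
proof (induction k)
  case 0 then show ?case by simp
next
  case (Suc k)
  show ?case
  proof (cases "i = Suc k")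
    case True then show ?thesis by simp
  next
    case False
    then have "i \<le> k" using Suc.prems by simp
    have "xhist A B C x1 w v sig \<gamma> (Suc k) \<omega> i = xhist A B C x1 w v sig \<gamma> k \<omega> i"
      using False by (simp add: Let_def)
    also have "\<dots> = xhist A B C x1 w v sig \<gamma> i \<omega> i" by (rule Suc.IH[OF \<open>i \<le> k\<close>])
    finally show ?thesis .
  qed
qed

lemma xhist_state: "1 \<le> i \<Longrightarrow> i \<le> k \<Longrightarrow> xhist A B C x1 w v sig \<gamma> k \<omega> i = state A B C x1 w v sig \<gamma> i \<omega>"
  unfolding state_def by (rule xhist_upto)

lemma state_Suc: "state A B C x1 w v sig \<gamma> (Suc k) \<omega> =
   (if k = 0 then x1 \<omega> else A *v state A B C x1 w v sig \<gamma> k \<omega> + B *v control A B C x1 w v sig \<gamma> k \<omega> + w k \<omega>)"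
  by (simp add: state_def control_def Let_def)

lemma state_decomp: "1 \<le> k \<Longrightarrow> state A B C x1 w v sig \<gamma> k \<omega> =
   xfree A x1 w k \<omega> + cp A B k (\<lambda>j. control A B C x1 w v sig \<gamma> j \<omega>)"
proof (induction k)
  case 0 then show ?case by simp
next
  case (Suc k)
  show ?case
  proof (cases "k = 0")
    case True then show ?thesis by (simp add: state_Suc)
  next
    case False
    then show ?thesis using Suc by (simp add: state_Suc algebra_simps)
  qed
qed

definition Ycl :: "real^'m^'n \<Rightarrow> (nat \<Rightarrow> 'a \<Rightarrow> real^'n) \<Rightarrow> (nat \<Rightarrow> real^'m) \<Rightarrow> 'a \<Rightarrow> nat \<Rightarrow> nat \<Rightarrow> real^'n" where
  "Ycl C v xs \<omega> j = ymeas C v xs \<omega> j"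

lemma control_eq: "control A B C x1 w v sig \<gamma> k \<omega> =
   \<gamma> k (\<lambda>j. if 1 \<le> j \<and> j \<le> k then sig j (ymeas C v (\<lambda>i. state A B C x1 w v sig \<gamma> i \<omega>) \<omega> j) \<omega> else undefined)"
proof -
  have "ymeas C v (xhist A B C x1 w v sig \<gamma> k \<omega>) \<omega> j = ymeas C v (\<lambda>i. state A B C x1 w v sig \<gamma> i \<omega>) \<omega> j"
    if "j \<le> k" for j
    using that by (auto simp: ymeas_def xhist_state)
  then show ?thesis
    unfolding control_def ctrl_def shist_def
    by (intro arg_cong[where f="\<gamma> k"]) auto
qed

definition LNlin :: "(nat \<Rightarrow> nat \<Rightarrow> nat \<Rightarrow> real^'n^'n) \<Rightarrow> real^'m^'m \<Rightarrow> real^'r^'m \<Rightarrow> real^'m^'n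
   \<Rightarrow> nat \<Rightarrow> (nat \<Rightarrow> real^'r) \<Rightarrow> nat \<Rightarrow> real^'n" where
  "LNlin Lt A B C j u = (\<lambda>i. if 1 \<le> i \<and> i \<le> j then (\<Sum>l\<in>{1..j}. Lt j i l *v (C *v cp A B l u)) else 0)"

lemma LNlin_cong: "(\<And>m. m < j \<Longrightarrow> u m = u' m) \<Longrightarrow> LNlin Lt A B C j u = LNlin Lt A B C j u'"
  unfolding LNlin_def
  by (intro ext if_cong refl sum.cong arg_cong[where f="\<lambda>z. _ *v (C *v z)"] cp_cong) auto

definition etafree where
  "etafree Kc A C x1 w v Lt \<theta> k \<omega> = (\<Sum>j\<in>{1..k}. \<Sum>i\<in>{1..j}. Kc k j i *v sfree A C x1 w v Lt \<theta> j \<omega> i)"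

definition Klin where
  "Klin Kc Lt A B C k u = (\<Sum>j\<in>{1..k}. \<Sum>i\<in>{1..j}. Kc k j i *v LNlin Lt A B C j u i)"

lemma Klin_cong: "(\<And>m. m < k \<Longrightarrow> u m = u' m) \<Longrightarrow> Klin Kc Lt A B C k u = Klin Kc Lt A B C k u'"
  unfolding Klin_def
  by (intro sum.cong refl arg_cong[where f="\<lambda>z. _ *v z i" for i] LNlin_cong) auto

lemma sigLN_closed:
  assumes "1 \<le> j'" "j' \<le> j"
    and xs: "\<And>l. 1 \<le> l \<Longrightarrow> xs l = xfree A x1 w l \<omega> + cp A B l u"
  shows "sigLN Lt \<theta> j' (ymeas C v xs \<omega> j) \<omega> = (\<lambda>i. sfree A C x1 w v Lt \<theta> j' \<omega> i + LNlin Lt A B C j' u i)"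
proof (rule ext)
  fix i
  have "(\<Sum>l\<in>{1..j'}. Lt j' i l *v ymeas C v xs \<omega> j l) =
        (\<Sum>l\<in>{1..j'}. Lt j' i l *v (if 1 \<le> l \<and> l \<le> j' then C *v xfree A x1 w l \<omega> + v l \<omega> else 0))
        + (\<Sum>l\<in>{1..j'}. Lt j' i l *v (C *v cp A B l u))"
    unfolding sum.distrib[symmetric]
    using assms by (intro sum.cong refl) (auto simp: ymeas_def xs algebra_simps)
  then show "sigLN Lt \<theta> j' (ymeas C v xs \<omega> j) \<omega> i = sfree A C x1 w v Lt \<theta> j' \<omega> i + LNlin Lt A B C j' u i"
    unfolding sigLN_def sfree_def LNlin_def by auto
qed

lemma sigK_closed:
  assumes xs: "\<And>l. 1 \<le> l \<Longrightarrow> xs l = xfree A x1 w l \<omega> + cp A B l u"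
  shows "sigK Kc Lt \<theta> j (ymeas C v xs \<omega> j) \<omega> = etafree Kc A C x1 w v Lt \<theta> j \<omega> + Klin Kc Lt A B C j u"
  unfolding sigK_def etafree_def Klin_def sum.distrib[symmetric]
  by (intro sum.cong refl) (auto simp: sigLN_closed[OF _ _ xs] matrix_vector_right_distrib)


lemma Int_stable_vimage: "Int_stable {f -` B \<inter> S | B. B \<in> sets N}"
  unfolding Int_stable_def
proof (intro ballI)
  fix a b assume "a \<in> {f -` B \<inter> S | B. B \<in> sets N}" "b \<in> {f -` B \<inter> S | B. B \<in> sets N}"
  then obtain B1 B2 where "a = f -` B1 \<inter> S" "B1 \<in> sets N" "b = f -` B2 \<inter> S" "B2 \<in> sets N" by blast
  then show "a \<inter> b \<in> {f -` B \<inter> S | B. B \<in> sets N}"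
    by (intro CollectI exI[of _ "B1 \<inter> B2"]) auto
qed

lemma meas_of_gen:
  assumes "space F = S" "\<And>B. B \<in> sets N \<Longrightarrow> f -` B \<inter> S \<in> sets F" "space N = UNIV"
  shows "f \<in> measurable F N"
  using assms by (intro measurableI) auto

lemma id_meas_subalg: "subalgebra M F \<Longrightarrow> id \<in> measurable M F"
  unfolding subalgebra_def by (intro measurableI) (auto dest: sets.sets_into_space)

locale lqg_base = prob_space M for M :: "'a measure" +
  fixes A :: "real^'m^'m" and B :: "real^'r^'m" and C :: "real^'m^'n"
    and x1 :: "'a \<Rightarrow> real^'m" and w :: "nat \<Rightarrow> 'a \<Rightarrow> real^'m" and v :: "nat \<Rightarrow> 'a \<Rightarrow> real^'n"
    and Lt :: "nat \<Rightarrow> nat \<Rightarrow> nat \<Rightarrow> real^'n^'n" and \<theta> :: "nat \<Rightarrow> 'a \<Rightarrow> nat \<Rightarrow> real^'n"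
    and Kc :: "nat \<Rightarrow> nat \<Rightarrow> nat \<Rightarrow> real^'n^'m" and \<kappa> :: nat
  assumes gx1: "centered_gaussian_vec M x1"
    and gw: "\<And>k. centered_gaussian_vec M (w k)"
    and gv: "\<And>k. centered_gaussian_vec M (v k)"
    and gth: "\<And>k. centered_gaussian_block M k (\<theta> k)"
    and indep: "indep_sets (prim_sets M x1 w v \<theta>) UNIV"
    and condexp: "\<And>k. k \<in> {1..\<kappa>} \<Longrightarrow> AE \<omega> in M. \<forall>c.
        (\<Sum>j\<in>{1..k}. \<Sum>i\<in>{1..j}. Kc k j i *v sfree A C x1 w v Lt \<theta> j \<omega> i) $ c
          = real_cond_exp M (sigma (space M)
     (\<Union>j\<in>{1..k}. (\<lambda>B. sfree A C x1 w v Lt \<theta> j -` B \<inter> space M) ` sets (PiM UNIV (\<lambda>_. borel)))) (\<lambda>\<omega>'. xfree A x1 w k \<omega>' $ c) \<omega>"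
begin

abbreviation "PS \<equiv> prim_sets M x1 w v \<theta>"
abbreviation "sf \<equiv> sfree A C x1 w v Lt \<theta>"
abbreviation "xf \<equiv> xfree A x1 w"
abbreviation "ef \<equiv> etafree Kc A C x1 w v Lt \<theta>"

definition SG :: "nat \<Rightarrow> 'a measure" where
  "SG k = sigma (space M) (\<Union>j\<in>{1..k}. (\<lambda>B. sf j -` B \<inter> space M) ` sets (PiM UNIV (\<lambda>_. borel)))"

definition Ih :: "nat \<Rightarrow> prim set" where
  "Ih k = insert PX1 (PW ` {1..<k} \<union> PV ` {1..k} \<union> PT ` {1..k})"

definition Hk :: "nat \<Rightarrow> 'a measure" where
  "Hk k = sigma (space M) (\<Union>p\<in>Ih k. PS p)"

definition Wm :: "nat \<Rightarrow> 'a measure" where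
  "Wm k = sigma (space M) (PS (PW k))"

lemma PS_events: "PS p \<subseteq> events"
  using indep unfolding indep_sets_def by auto

lemma PS_space: "PS p \<subseteq> Pow (space M)"
  using PS_events sets.sets_into_space by blast

lemma space_Hk[simp]: "space (Hk k) = space M"
  unfolding Hk_def using PS_space by (intro space_measure_of) blast

lemma sets_Hk: "sets (Hk k) = sigma_sets (space M) (\<Union>p\<in>Ih k. PS p)"
  unfolding Hk_def using PS_space by (intro sets_measure_of) blast

lemma space_Wm[simp]: "space (Wm k) = space M"
  unfolding Wm_def using PS_space by (intro space_measure_of) blast

lemma sets_Wm: "sets (Wm k) = sigma_sets (space M) (PS (PW k))"
  unfolding Wm_def using PS_space by (intro sets_measure_of) blast

lemma subalg_Hk: "subalgebra M (Hk k)"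
  unfolding subalgebra_def sets_Hk using PS_events by (auto intro!: sets.sigma_sets_subset)

lemma subalg_Wm: "subalgebra M (Wm k)"
  unfolding subalgebra_def sets_Wm using PS_events by (auto intro!: sets.sigma_sets_subset)

lemma PS_in_Hk: "p \<in> Ih k \<Longrightarrow> X \<in> PS p \<Longrightarrow> X \<in> sets (Hk k)"
  unfolding sets_Hk by (auto intro: sigma_sets.Basic)

lemma x1_Hk: "x1 \<in> borel_measurable (Hk k)"
  by (rule meas_of_gen[OF space_Hk _ space_borel], rule PS_in_Hk[of PX1])
     (auto simp: Ih_def prim_sets_def)

lemma w_Hk: "1 \<le> j \<Longrightarrow> j < k \<Longrightarrow> w j \<in> borel_measurable (Hk k)"
  by (rule meas_of_gen[OF space_Hk _ space_borel], rule PS_in_Hk[of "PW j"])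
     (auto simp: Ih_def prim_sets_def)

lemma v_Hk: "1 \<le> j \<Longrightarrow> j \<le> k \<Longrightarrow> v j \<in> borel_measurable (Hk k)"
  by (rule meas_of_gen[OF space_Hk _ space_borel], rule PS_in_Hk[of "PV j"])
     (auto simp: Ih_def prim_sets_def)

lemma mth_Hk: "1 \<le> j \<Longrightarrow> j \<le> k \<Longrightarrow> (\<lambda>\<omega>. mask_blocks j (\<theta> j \<omega>)) \<in> measurable (Hk k) (PiM UNIV (\<lambda>_. borel))"
  by (rule meas_of_gen[OF space_Hk], rule PS_in_Hk[of "PT j"])
     (auto simp: Ih_def prim_sets_def space_PiM)

lemma w_Wm: "w k \<in> borel_measurable (Wm k)"
  by (rule meas_of_gen[OF space_Wm _ space_borel]) (auto simp: sets_Wm prim_sets_def intro: sigma_sets.Basic)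

lemma th_Hk: "1 \<le> i \<Longrightarrow> i \<le> j \<Longrightarrow> j \<le> k \<Longrightarrow> (\<lambda>\<omega>. \<theta> j \<omega> i) \<in> borel_measurable (Hk k)"
proof -
  assume a: "1 \<le> i" "i \<le> j" "j \<le> k"
  have "(\<lambda>\<omega>. mask_blocks j (\<theta> j \<omega>) i) \<in> borel_measurable (Hk k)"
    using measurable_component_singleton'[OF mth_Hk measurable_ident, of j k i] a by simp
  moreover have "mask_blocks j (\<theta> j \<omega>) i = \<theta> j \<omega> i" for \<omega> using a by (simp add: mask_blocks_def)
  ultimately show ?thesis by simp
qed

lemma xf_Hk: "j \<le> k \<Longrightarrow> xf j \<in> borel_measurable (Hk k)"
proof (induction j)
  case 0 then show ?case using x1_Hk by simp
next
  case (Suc j)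
  show ?case
  proof (cases "j = 0")
    case True then show ?thesis using x1_Hk by simp
  next
    case False
    have [measurable]: "xf j \<in> borel_measurable (Hk k)" using Suc by simp
    have [measurable]: "w j \<in> borel_measurable (Hk k)" using Suc.prems False by (intro w_Hk) auto
    show ?thesis using False by simp
  qed
qed

lemma sf_comp_Hk: "j \<le> k \<Longrightarrow> (\<lambda>\<omega>. sf j \<omega> i) \<in> borel_measurable (Hk k)"
proof (cases "1 \<le> i \<and> i \<le> j")
  case True
  assume jk: "j \<le> k"
  have [measurable]: "xf l \<in> borel_measurable (Hk k)" if "l \<le> j" for l using that jk by (intro xf_Hk) auto
  have [measurable]: "v l \<in> borel_measurable (Hk k)" if "1 \<le> l" "l \<le> j" for l using that jk by (intro v_Hk) auto
  have [measurable]: "(\<lambda>\<omega>. \<theta> j \<omega> i) \<in> borel_measurable (Hk k)" using True jk by (intro th_Hk) auto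
  have "(\<lambda>\<omega>. (\<Sum>l\<in>{1..j}. Lt j i l *v (if 1 \<le> l \<and> l \<le> j then C *v xf l \<omega> + v l \<omega> else 0)) + \<theta> j \<omega> i)
          \<in> borel_measurable (Hk k)"
  proof (intro borel_measurable_add borel_measurable_sum)
    fix l assume "l \<in> {1..j}"
    then have [measurable]: "xf l \<in> borel_measurable (Hk k)" "v l \<in> borel_measurable (Hk k)" using jk
      by (auto intro: xf_Hk v_Hk)
    show "(\<lambda>\<omega>. Lt j i l *v (if 1 \<le> l \<and> l \<le> j then C *v xf l \<omega> + v l \<omega> else 0)) \<in> borel_measurable (Hk k)"
      using \<open>l \<in> {1..j}\<close> by simp
  qed simp
  then show ?thesis using True by (simp add: sfree_def sigLN_def)
next
  case False then have "\<And>\<omega>. sf j \<omega> i = 0" by (auto simp: sfree_def sigLN_def)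
  then show ?thesis by simp
qed

lemma sf_Hk: "j \<le> k \<Longrightarrow> sf j \<in> measurable (Hk k) (PiM UNIV (\<lambda>_. borel))"
  using measurable_PiM_single'[of UNIV "\<lambda>i \<omega>. sf j \<omega> i" "Hk k" "\<lambda>_. borel"] sf_comp_Hk
  by (simp add: space_PiM)

lemma SG_gen_sub: "(\<Union>j\<in>{1..k}. (\<lambda>B. sf j -` B \<inter> space M) ` sets (PiM UNIV (\<lambda>_. borel))) \<subseteq> sets (Hk k)"
proof safe
  fix j X assume "j \<in> {1..k}" "X \<in> sets (PiM (UNIV::nat set) (\<lambda>_. borel :: (real^'n) measure))"
  then show "sf j -` X \<inter> space M \<in> sets (Hk k)"
    using sf_Hk[of j k] unfolding measurable_def by auto
qed

lemma SG_gen_space: "(\<Union>j\<in>{1..k}. (\<lambda>B. sf j -` B \<inter> space M) ` sets (PiM UNIV (\<lambda>_. borel))) \<subseteq> Pow (space M)"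
  by auto

lemma space_SG[simp]: "space (SG k) = space M"
  unfolding SG_def by (rule space_measure_of[OF SG_gen_space])

lemma sets_SG: "sets (SG k) = sigma_sets (space M) (\<Union>j\<in>{1..k}. (\<lambda>B. sf j -` B \<inter> space M) ` sets (PiM UNIV (\<lambda>_. borel)))"
  unfolding SG_def by (rule sets_measure_of[OF SG_gen_space])

lemma subalg_SG_Hk: "subalgebra (Hk k) (SG k)"
proof -
  interpret H: sigma_algebra "space M" "sets (Hk k)"
    using sets.sigma_algebra_axioms[of "Hk k"] by simp
  show ?thesis
    unfolding subalgebra_def sets_SG using SG_gen_sub by (auto intro!: H.sigma_sets_subset)
qed

lemma subalg_SG: "subalgebra M (SG k)"
  using subalg_SG_Hk subalg_Hk unfolding subalgebra_def by auto

lemma SG_Hk_meas: "f \<in> measurable (SG k) N \<Longrightarrow> f \<in> measurable (Hk k) N"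
  by (rule measurable_from_subalg[OF subalg_SG_Hk])

lemma SG_M_meas: "f \<in> measurable (SG k) N \<Longrightarrow> f \<in> measurable M N"
  by (rule measurable_from_subalg[OF subalg_SG])

lemma Hk_M_meas: "f \<in> measurable (Hk k) N \<Longrightarrow> f \<in> measurable M N"
  by (rule measurable_from_subalg[OF subalg_Hk])

lemma sf_SG: "1 \<le> j \<Longrightarrow> j \<le> k \<Longrightarrow> sf j \<in> measurable (SG k) (PiM UNIV (\<lambda>_. borel))"
  apply (rule meas_of_gen[OF space_SG])
    apply (simp_all add: sets_SG space_PiM)
  apply (rule sigma_sets.Basic)
  apply (rule UN_I[of j])
  by auto

lemma sf_comp_SG: "1 \<le> j \<Longrightarrow> j \<le> k \<Longrightarrow> (\<lambda>\<omega>. sf j \<omega> i) \<in> borel_measurable (SG k)"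
  using measurable_component_singleton'[OF sf_SG measurable_ident, of j k i] by simp

lemma ef_SG: "k' \<le> k \<Longrightarrow> ef k' \<in> borel_measurable (SG k)"
  unfolding etafree_def
  by (intro borel_measurable_sum mv_meas sf_comp_SG) auto

end


context lqg_base
begin

lemma gauss_vsqi:
  assumes "centered_gaussian_vec M X"
  shows "vsqi X" "\<And>c. integral\<^sup>L M (\<lambda>\<omega>. X \<omega> $ c) = 0"
proof -
  have *: "centered_normal_rv M (\<lambda>\<omega>. X \<omega> $ c)" for c
    using assms[unfolded centered_gaussian_vec_def, rule_format, of "axis c 1"]
    by (simp add: inner_axis')
  show "vsqi X" unfolding vsqi_def using centered_normal_sqi(1)[OF *] by simp
  show "integral\<^sup>L M (\<lambda>\<omega>. X \<omega> $ c) = 0" for c using centered_normal_sqi(2)[OF *] .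
qed

lemma x1_vsqi: "vsqi x1" using gauss_vsqi(1)[OF gx1] .
lemma w_vsqi: "vsqi (w k)" using gauss_vsqi(1)[OF gw] .
lemma v_vsqi: "vsqi (v k)" using gauss_vsqi(1)[OF gv] .
lemma w_mean: "integral\<^sup>L M (\<lambda>\<omega>. w k \<omega> $ c) = 0" using gauss_vsqi(2)[OF gw] .

lemma th_vsqi: assumes "1 \<le> i" "i \<le> k" shows "vsqi (\<lambda>\<omega>. \<theta> k \<omega> i)"
  unfolding vsqi_def
proof
  fix a
  let ?c = "\<lambda>i'. if i' = i then axis a 1 else (0::real^'n)"
  have "(\<Sum>i'\<in>{1..k}. ?c i' \<bullet> \<theta> k \<omega> i') = (\<Sum>i'\<in>{1..k}. if i' = i then \<theta> k \<omega> i $ a else 0)" for \<omega>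
    by (intro sum.cong refl) (simp add: inner_axis')
  also have "\<dots> \<omega> = \<theta> k \<omega> i $ a" for \<omega> using assms by simp
  finally have "centered_normal_rv M (\<lambda>\<omega>. \<theta> k \<omega> i $ a)"
    using gth[of k, unfolded centered_gaussian_block_def, rule_format, of ?c] by simp
  then show "sqi (\<lambda>\<omega>. \<theta> k \<omega> i $ a)" by (rule centered_normal_sqi)
qed

lemma xf_vsqi: "vsqi (xf j)"
proof (induction j)
  case 0 then show ?case using x1_vsqi by simp
next
  case (Suc j) then show ?case using x1_vsqi
    by (cases "j = 0") (auto intro!: vsqi_add vsqi_mv w_vsqi)
qed

lemma sf_vsqi: "vsqi (\<lambda>\<omega>. sf j \<omega> i)"
proof (cases "1 \<le> i \<and> i \<le> j")
  case True
  have "vsqi (\<lambda>\<omega>. (\<Sum>l\<in>{1..j}. Lt j i l *v (if 1 \<le> l \<and> l \<le> j then C *v xf l \<omega> + v l \<omega> else 0)) + \<theta> j \<omega> i)"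
  proof (intro vsqi_add vsqi_sum th_vsqi)
    fix l assume "l \<in> {1..j}"
    then show "vsqi (\<lambda>\<omega>. Lt j i l *v (if 1 \<le> l \<and> l \<le> j then C *v xf l \<omega> + v l \<omega> else 0))"
      by (auto intro!: vsqi_mv vsqi_add xf_vsqi v_vsqi)
  qed (use True in auto)
  then show ?thesis using True by (simp add: sfree_def sigLN_def)
next
  case False then have "\<And>\<omega>. sf j \<omega> i = 0" by (auto simp: sfree_def sigLN_def)
  then show ?thesis by simp
qed

lemma ef_vsqi: "vsqi (ef k)"
  unfolding etafree_def by (intro vsqi_sum vsqi_mv sf_vsqi)

lemma orth_w:
  assumes f: "f \<in> borel_measurable (Hk k)" and sf: "sqi f"
  shows "integral\<^sup>L M (\<lambda>\<omega>. f \<omega> * w k \<omega> $ c) = 0"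
proof -
  let ?I = "\<lambda>b. if b then Ih k else {PW k}"
  have "indep_sets (\<lambda>b. sigma_sets (space M) (\<Union>i\<in>?I b. PS i)) UNIV"
  proof (rule indep_sets_collect_sigma)
    show "indep_sets PS (\<Union>j\<in>UNIV. ?I j)"
      by (rule indep_sets_mono_index[OF _ indep]) auto
    show "Int_stable (PS i)" for i
      by (cases i) (simp_all add: prim_sets_def Int_stable_vimage)
    show "disjoint_family_on ?I UNIV"
      unfolding disjoint_family_on_def by (auto simp: Ih_def)
  qed
  then have ind: "indep_sets (\<lambda>b. if b then sets (Hk k) else sets (Wm k)) UNIV"
    by (rule indep_sets_cong[THEN iffD1, rotated 2]) (auto simp: sets_Hk sets_Wm)
  have rv: "\<forall>i\<in>UNIV. random_variable (case_bool (Hk k) (Wm k) i) (case_bool id id i)"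
    using id_meas_subalg[OF subalg_Hk] id_meas_subalg[OF subalg_Wm] by (auto split: bool.split)
  have eqp: "{case_bool id id i -` A \<inter> space M |A. A \<in> sets (case_bool (Hk k) (Wm k) i)} =
          (if i then sets (Hk k) else sets (Wm k))" for i
  proof -
    have "A \<subseteq> space M" if "A \<in> sets (Hk k)" for A using sets.sets_into_space[OF that] by simp
    moreover have "A \<subseteq> space M" if "A \<in> sets (Wm k)" for A using sets.sets_into_space[OF that] by simp
    ultimately show ?thesis by (cases i) (auto simp: Int_absorb2)
  qed
  have eqs: "sigma_sets (space M) {case_bool id id i -` A \<inter> space M |A. A \<in> sets (case_bool (Hk k) (Wm k) i)} =
          (if i then sets (Hk k) else sets (Wm k))" for i
    unfolding eqp using sets.sigma_sets_eq[of "Hk k"] sets.sigma_sets_eq[of "Wm k"] by simp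
  have "indep_sets (\<lambda>i. sigma_sets (space M) {case_bool id id i -` A \<inter> space M |A. A \<in> sets (case_bool (Hk k) (Wm k) i)}) UNIV"
    using ind by (rule indep_sets_cong[THEN iffD1, rotated 2]) (simp_all only: eqs)
  with rv have "indep_var (Hk k) id (Wm k) id"
    unfolding indep_var_def indep_vars_def by blast
  from indep_var_compose[OF this f vec_nth_meas[OF w_Wm, of k c]]
  have "indep_var borel f borel (\<lambda>\<omega>. w k \<omega> $ c)" by (simp add: comp_def)
  moreover have "integrable M f" by (rule sqi_integrable[OF sf])
  moreover have "integrable M (\<lambda>\<omega>. w k \<omega> $ c)" using w_vsqi unfolding vsqi_def by (blast intro: sqi_integrable)
  ultimately have "integral\<^sup>L M (\<lambda>\<omega>. f \<omega> * w k \<omega> $ c) = integral\<^sup>L M f * integral\<^sup>L M (\<lambda>\<omega>. w k \<omega> $ c)"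
    by (rule indep_var_lebesgue_integral)
  then show ?thesis by (simp add: w_mean)
qed

lemma orth_e:
  assumes k: "k \<in> {1..\<kappa>}" and f: "f \<in> borel_measurable (SG k)" and sf: "sqi f"
  shows "integral\<^sup>L M (\<lambda>\<omega>. f \<omega> * (xf k \<omega> $ c - ef k \<omega> $ c)) = 0"
proof -
  interpret S: finite_measure_subalgebra M "SG k"
    by unfold_locales (rule subalg_SG)
  have sx: "sqi (\<lambda>\<omega>. xf k \<omega> $ c)" using xf_vsqi unfolding vsqi_def by blast
  have se: "sqi (\<lambda>\<omega>. ef k \<omega> $ c)" using ef_vsqi unfolding vsqi_def by blast
  have AEe: "AE \<omega> in M. ef k \<omega> $ c = real_cond_exp M (SG k) (\<lambda>\<omega>'. xf k \<omega>' $ c) \<omega>"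
    using condexp[OF k] unfolding SG_def etafree_def by auto
  have i1: "integrable M (\<lambda>\<omega>. f \<omega> * xf k \<omega> $ c)" by (rule sqi_mult[OF sf sx])
  have i2: "integrable M (\<lambda>\<omega>. f \<omega> * ef k \<omega> $ c)" by (rule sqi_mult[OF sf se])
  have fM: "f \<in> borel_measurable M" using sf by (simp add: sqi_def)
  have rM: "real_cond_exp M (SG k) (\<lambda>\<omega>'. xf k \<omega>' $ c) \<in> borel_measurable M"
    by (rule borel_measurable_cond_exp2)
  have "integral\<^sup>L M (\<lambda>\<omega>. f \<omega> * ef k \<omega> $ c) =
        integral\<^sup>L M (\<lambda>\<omega>. f \<omega> * real_cond_exp M (SG k) (\<lambda>\<omega>'. xf k \<omega>' $ c) \<omega>)"
    by (rule integral_cong_AE) (use AEe fM rM sqi_meas[OF se] in auto)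
  also have "\<dots> = integral\<^sup>L M (\<lambda>\<omega>. f \<omega> * xf k \<omega> $ c)"
    by (rule S.real_cond_exp_intg(2)[OF i1 f sqi_meas[OF sx]])
  finally show ?thesis
    using i1 i2 by (simp add: right_diff_distrib)
qed

end


section \<open>Matrix algebra\<close>

lemma tr_inner: "(x::real^'n) \<bullet> (transpose N *v y) = (N *v x) \<bullet> y"
proof -
  have "x \<bullet> (transpose N *v y) = (y v* N) \<bullet> x" by (simp add: inner_commute)
  also have "\<dots> = y \<bullet> (N *v x)" by (rule dot_lmul_matrix)
  finally show ?thesis by (simp add: inner_commute)
qed

lemma transpose_add: "transpose (P1 + P2) = transpose P1 + transpose (P2::real^'n^'m)"
  by (simp add: transpose_def vec_eq_iff)

lemma transpose_diff: "transpose (P1 - P2) = transpose P1 - transpose (P2::real^'n^'m)"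
  by (simp add: transpose_def vec_eq_iff)

lemma qf_add_mat: "qf (P1 + P2) z = qf P1 z + qf P2 z"
  by (simp add: qf_def matrix_vector_mult_add_rdistrib inner_add_right)

lemma qf_diff_mat: "qf (P1 - P2) z = qf P1 z - qf P2 z"
  by (simp add: qf_def matrix_vector_mult_diff_rdistrib inner_diff_right)

lemma qf_zero_mat[simp]: "qf 0 z = 0"
  by (simp add: qf_def)

lemma sym_cross: "transpose P = P \<Longrightarrow> (a::real^'n) \<bullet> (P *v b) = b \<bullet> (P *v a)"
  by (metis tr_inner inner_commute)

lemma qf_add_vec: "transpose P = P \<Longrightarrow> qf P (a + b) = qf P a + 2 * (a \<bullet> (P *v b)) + qf P b"
  unfolding qf_def using sym_cross[of P a b]
  by (simp add: matrix_vector_right_distrib inner_add_left inner_add_right)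

lemma qf_congr: "qf (transpose N ** P ** N) z = qf P (N *v z)"
proof -
  have "(transpose N ** P ** N) *v z = transpose N *v (P *v (N *v z))"
    by (simp only: matrix_vector_mul_assoc matrix_mul_assoc)
  then show ?thesis unfolding qf_def by (simp only: tr_inner)
qed

lemma qf_scale: "qf P (c *\<^sub>R z) = c\<^sup>2 * qf P z"
  by (simp add: qf_def matrix_vector_mult_scaleR power2_eq_square)

lemma pd_lower:
  assumes "pd_mat (R::real^'r^'r)"
  shows "\<exists>c>0. \<forall>z. c * (z \<bullet> z) \<le> qf R z"
proof -
  let ?S = "sphere (0::real^'r) 1"
  have cS: "compact ?S" by simp
  have nS: "?S \<noteq> {}"
  proof -
    obtain i :: 'r where True by simp
    have "norm (axis i (1::real)) = 1" by simp
    then show ?thesis by auto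
  qed
  have ctS: "continuous_on ?S (qf R)"
    unfolding qf_def by (intro continuous_intros continuous_on_compose2[OF linear_continuous_on[OF matrix_vector_mul_bounded_linear]]) auto
  obtain z0 where z0: "z0 \<in> ?S" "\<And>y. y \<in> ?S \<Longrightarrow> qf R z0 \<le> qf R y"
    using continuous_attains_inf[OF cS nS ctS] by blast
  have "z0 \<noteq> 0" using z0(1) by auto
  then have c: "qf R z0 > 0" using assms by (simp add: pd_mat_def qf_def)
  have "qf R z0 * (z \<bullet> z) \<le> qf R z" for z
  proof (cases "z = 0")
    case True then show ?thesis by (simp add: qf_def)
  next
    case False
    let ?y = "(1 / norm z) *\<^sub>R z"
    have "?y \<in> ?S" using False by (simp add: norm_scaleR)
    then have "qf R z0 \<le> qf R ?y" by (rule z0(2))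
    also have "qf R ?y = qf R z / (norm z)\<^sup>2" by (simp add: qf_scale power_divide)
    finally have "qf R z0 * (norm z)\<^sup>2 \<le> qf R z" using False by (simp add: field_simps)
    then show ?thesis by (simp add: power2_norm_eq_inner)
  qed
  with c show ?thesis by blast
qed

lemma pd_inv:
  assumes "pd_mat (L::real^'r^'r)"
  shows "\<exists>K. L ** K = T"
proof -
  have "\<forall>x. L *v x = 0 \<longrightarrow> x = 0"
    using assms by (auto simp: pd_mat_def)
  then obtain Li where "Li ** L = mat 1" using matrix_left_invertible_ker by blast
  then have "L ** Li = mat 1" using matrix_left_right_inverse by blast
  then have "L ** (Li ** T) = T" by (simp add: matrix_mul_assoc)
  then show ?thesis by blast
qed

locale ric =
  fixes A :: "real^'m^'m" and B :: "real^'r^'m" and Q :: "real^'m^'m" and R :: "real^'r^'r"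
  assumes psdQ: "psd_mat Q" and pdR: "pd_mat R"
begin

definition Lam :: "real^'m^'m \<Rightarrow> real^'r^'r" where
  "Lam P = R + transpose B ** P ** B"

definition Kof :: "real^'m^'m \<Rightarrow> real^'m^'r" where
  "Kof P = (SOME K. Lam P ** K = transpose B ** P ** A)"

definition Snext :: "real^'m^'m \<Rightarrow> real^'m^'m" where
  "Snext P = transpose A ** P ** A - transpose (Kof P) ** Lam P ** Kof P"

lemma Lam_pd: assumes "psd_mat P" shows "pd_mat (Lam P)"
proof -
  have sP: "transpose P = P" and pP: "\<And>z. 0 \<le> z \<bullet> (P *v z)" using assms by (auto simp: psd_mat_def)
  have sR: "transpose R = R" and pR: "\<And>z. z \<noteq> 0 \<Longrightarrow> 0 < z \<bullet> (R *v z)" using pdR by (auto simp: pd_mat_def)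
  have "transpose (Lam P) = Lam P"
    by (simp add: Lam_def transpose_add matrix_transpose_mul sP sR matrix_mul_assoc)
  moreover have "0 < z \<bullet> (Lam P *v z)" if "z \<noteq> 0" for z
  proof -
    have "z \<bullet> (Lam P *v z) = qf R z + qf P (B *v z)"
      using qf_congr[of B P z] by (simp add: Lam_def qf_add_mat[unfolded qf_def] qf_def)
    then show ?thesis using pR[OF that] pP[of "B *v z"] by (simp add: qf_def)
  qed
  ultimately show ?thesis by (simp add: pd_mat_def)
qed

lemma Kof: assumes "psd_mat P" shows "Lam P ** Kof P = transpose B ** P ** A"
  unfolding Kof_def using pd_inv[OF Lam_pd[OF assms]] by (rule someI_ex)

lemma key_identity:
  assumes "psd_mat P"
  shows "qf P (A *v x + B *v u) + qf R u = qf (Snext P) x + qf (Lam P) (u + Kof P *v x)"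
proof -
  have sP: "transpose P = P" using assms by (simp add: psd_mat_def)
  have sL: "transpose (Lam P) = Lam P" using Lam_pd[OF assms] by (simp add: pd_mat_def)
  let ?K = "Kof P" and ?L = "Lam P"
  have LK: "?L *v (?K *v x) = transpose B *v (P *v (A *v x))"
    using Kof[OF assms] by (simp only: matrix_vector_mul_assoc matrix_mul_assoc)
  have c1: "u \<bullet> (?L *v (?K *v x)) = (B *v u) \<bullet> (P *v (A *v x))"
    by (simp only: LK tr_inner)
  have "qf ?L (u + ?K *v x) = qf ?L u + 2 * (u \<bullet> (?L *v (?K *v x))) + qf ?L (?K *v x)"
    by (rule qf_add_vec[OF sL])
  moreover have "qf ?L u = qf R u + qf P (B *v u)"
    using qf_congr[of B P u] by (simp add: Lam_def qf_add_mat)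
  moreover have "qf (Snext P) x = qf P (A *v x) - qf ?L (?K *v x)"
    using qf_congr[of A P x] qf_congr[of ?K ?L x] by (simp add: Snext_def qf_diff_mat)
  moreover have "qf P (A *v x + B *v u) = qf P (A *v x) + 2 * ((A *v x) \<bullet> (P *v (B *v u))) + qf P (B *v u)"
    by (rule qf_add_vec[OF sP])
  moreover have "(A *v x) \<bullet> (P *v (B *v u)) = (B *v u) \<bullet> (P *v (A *v x))"
    by (rule sym_cross[OF sP])
  ultimately show ?thesis using c1 by simp
qed

lemma Snext_psd: assumes "psd_mat P" shows "psd_mat (Snext P)"
proof -
  have sP: "transpose P = P" and pP: "\<And>z. 0 \<le> z \<bullet> (P *v z)" using assms by (auto simp: psd_mat_def)
  have sL: "transpose (Lam P) = Lam P" using Lam_pd[OF assms] by (simp add: pd_mat_def)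
  have pR: "\<And>z. 0 \<le> z \<bullet> (R *v z)" using pdR unfolding pd_mat_def
    by (metis inner_zero_left order_less_imp_le order_refl)
  have "transpose (Snext P) = Snext P"
    by (simp add: Snext_def transpose_diff matrix_transpose_mul sP sL matrix_mul_assoc)
  moreover have "0 \<le> z \<bullet> (Snext P *v z)" for z
  proof -
    have "qf (Snext P) z = qf P (A *v z + B *v (- (Kof P *v z))) + qf R (- (Kof P *v z))"
      using key_identity[OF assms, of z "- (Kof P *v z)"] by (simp add: qf_def)
    moreover have "0 \<le> qf P (A *v z + B *v (- (Kof P *v z)))" using pP by (simp only: qf_def)
    moreover have "0 \<le> qf R (- (Kof P *v z))" using pR by (simp only: qf_def)
    ultimately show ?thesis unfolding qf_def by linarith
  qed
  ultimately show ?thesis by (simp add: psd_mat_def)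
qed

fun Sr :: "nat \<Rightarrow> real^'m^'m" where
  "Sr 0 = 0"
| "Sr (Suc n) = Snext (Q + Sr n)"

lemma psd_add: "psd_mat P1 \<Longrightarrow> psd_mat P2 \<Longrightarrow> psd_mat (P1 + P2)"
  by (simp add: psd_mat_def transpose_add matrix_vector_mult_add_rdistrib inner_add_right add_nonneg_nonneg)

lemma psd_zero: "psd_mat (0::real^'m^'m)"
  by (simp add: psd_mat_def transpose_def vec_eq_iff)

lemma Sr_psd: "psd_mat (Sr n)"
  by (induction n) (simp_all add: psd_zero Snext_psd psd_add psdQ)

lemma QSr_psd: "psd_mat (Q + Sr n)"
  by (rule psd_add[OF psdQ Sr_psd])

end


lemma cp_cong1: "(\<And>j. 1 \<le> j \<Longrightarrow> j < k \<Longrightarrow> u j = u' j) \<Longrightarrow> cp A B k u = cp A B k u'"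
proof (induction k)
  case (Suc k) then show ?case by (cases "k = 0") auto
qed simp

lemma cp_meas: "(\<And>j. 1 \<le> j \<Longrightarrow> j < k \<Longrightarrow> U j \<in> borel_measurable F) \<Longrightarrow>
   (\<lambda>\<omega>. cp A B k (\<lambda>j. U j \<omega>)) \<in> borel_measurable F"
proof (induction k)
  case 0 then show ?case by simp
next
  case (Suc k)
  show ?case
  proof (cases "k = 0")
    case True then show ?thesis by simp
  next
    case False
    have [measurable]: "(\<lambda>\<omega>. cp A B k (\<lambda>j. U j \<omega>)) \<in> borel_measurable F" using Suc by simp
    have [measurable]: "U k \<in> borel_measurable F" using Suc.prems False by simp
    show ?thesis using False by simp
  qed
qed

lemma (in prob_space) cp_vsqi: "(\<And>j. 1 \<le> j \<Longrightarrow> j < k \<Longrightarrow> vsqi (U j)) \<Longrightarrow>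
   vsqi (\<lambda>\<omega>. cp A B k (\<lambda>j. U j \<omega>))"
proof (induction k)
  case 0 then show ?case by simp
next
  case (Suc k) then show ?case by (cases "k = 0") (auto intro!: vsqi_add vsqi_mv)
qed

lemma sum_telescope1: "(\<Sum>k\<in>{1..n}. g k - g (Suc k)) = g 1 - (g (Suc n) :: real)"
  by (induction n) (auto simp: atLeastAtMostSuc_conv)

lemma inner_as_sum_tr: "(a::real^'n) \<bullet> (N *v b) = (\<Sum>c\<in>UNIV. (transpose N *v a) $ c * b $ c)"
proof -
  have "a \<bullet> (N *v b) = a \<bullet> (transpose (transpose N) *v b)" by simp
  also have "\<dots> = (transpose N *v a) \<bullet> b" by (rule tr_inner)
  finally show ?thesis by (simp add: inner_vec_def)
qed

locale lqg = lqg_base M A B C x1 w v Lt \<theta> Kc \<kappa> + ric A B Q R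
  for M :: "'a measure"
    and A :: "real^'m^'m" and B :: "real^'r^'m" and C :: "real^'m^'n"
    and x1 :: "'a \<Rightarrow> real^'m" and w :: "nat \<Rightarrow> 'a \<Rightarrow> real^'m" and v :: "nat \<Rightarrow> 'a \<Rightarrow> real^'n"
    and Lt :: "nat \<Rightarrow> nat \<Rightarrow> nat \<Rightarrow> real^'n^'n" and \<theta> :: "nat \<Rightarrow> 'a \<Rightarrow> nat \<Rightarrow> real^'n"
    and Kc :: "nat \<Rightarrow> nat \<Rightarrow> nat \<Rightarrow> real^'n^'m" and \<kappa> :: nat
    and Q :: "real^'m^'m" and R :: "real^'r^'r"
begin

definition Mk :: "nat \<Rightarrow> real^'m^'m" where "Mk k = Q + Sr (\<kappa> - k)"
definition Lk :: "nat \<Rightarrow> real^'r^'r" where "Lk k = Lam (Mk k)"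
definition Kk :: "nat \<Rightarrow> real^'m^'r" where "Kk k = Kof (Mk k)"

definition Xp :: "(nat \<Rightarrow> 'a \<Rightarrow> real^'r) \<Rightarrow> nat \<Rightarrow> 'a \<Rightarrow> real^'m" where
  "Xp U k \<omega> = xf k \<omega> + cp A B k (\<lambda>j. U j \<omega>)"

definition ak :: "(nat \<Rightarrow> 'a \<Rightarrow> real^'r) \<Rightarrow> nat \<Rightarrow> 'a \<Rightarrow> real^'r" where
  "ak U k \<omega> = U k \<omega> + Kk k *v (ef k \<omega> + cp A B k (\<lambda>j. U j \<omega>))"

definition ek :: "nat \<Rightarrow> 'a \<Rightarrow> real^'m" where
  "ek k \<omega> = xf k \<omega> - ef k \<omega>"

definition C0 :: real where
  "C0 = integral\<^sup>L M (\<lambda>\<omega>. qf (Sr \<kappa>) (x1 \<omega>)) +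
        (\<Sum>k\<in>{1..\<kappa>}. integral\<^sup>L M (\<lambda>\<omega>. qf (Mk k) (w k \<omega>)) + integral\<^sup>L M (\<lambda>\<omega>. qf (Lk k) (Kk k *v ek k \<omega>)))"

lemma Mk_psd: "psd_mat (Mk k)" unfolding Mk_def by (rule QSr_psd)
lemma Mk_sym: "transpose (Mk k) = Mk k" using Mk_psd by (simp add: psd_mat_def)
lemma Lk_pd: "pd_mat (Lk k)" unfolding Lk_def by (rule Lam_pd[OF Mk_psd])
lemma Lk_sym: "transpose (Lk k) = Lk k" using Lk_pd by (simp add: pd_mat_def)

lemma Snext_Mk: "k \<le> \<kappa> \<Longrightarrow> Snext (Mk k) = Sr (Suc (\<kappa> - k))"
  by (simp add: Mk_def)

lemma ek_vsqi: "vsqi (ek k)" unfolding ek_def by (intro vsqi_diff xf_vsqi ef_vsqi)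

lemma pointwise_identity:
  assumes "1 \<le> k" "k \<le> \<kappa>"
  shows "qf Q (Xp U (Suc k) \<omega>) + qf R (U k \<omega>) =
     qf (Sr (Suc (\<kappa> - k))) (Xp U k \<omega>) - qf (Sr (\<kappa> - k)) (Xp U (Suc k) \<omega>)
     + 2 * ((A *v Xp U k \<omega> + B *v U k \<omega>) \<bullet> (Mk k *v w k \<omega>)) + qf (Mk k) (w k \<omega>)
     + qf (Lk k) (ak U k \<omega>) + 2 * (ak U k \<omega> \<bullet> (Lk k *v (Kk k *v ek k \<omega>))) + qf (Lk k) (Kk k *v ek k \<omega>)"
proof -
  let ?x = "Xp U k \<omega>" and ?u = "U k \<omega>"
  let ?z = "A *v ?x + B *v ?u"
  have XS: "Xp U (Suc k) \<omega> = ?z + w k \<omega>"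
    using assms by (simp add: Xp_def algebra_simps)
  have "qf Q (Xp U (Suc k) \<omega>) = qf (Mk k) (Xp U (Suc k) \<omega>) - qf (Sr (\<kappa> - k)) (Xp U (Suc k) \<omega>)"
    by (simp add: Mk_def qf_add_mat)
  moreover have "qf (Mk k) (Xp U (Suc k) \<omega>) = qf (Mk k) ?z + 2 * (?z \<bullet> (Mk k *v w k \<omega>)) + qf (Mk k) (w k \<omega>)"
    unfolding XS by (rule qf_add_vec[OF Mk_sym])
  moreover have "qf (Mk k) ?z + qf R ?u = qf (Sr (Suc (\<kappa> - k))) ?x + qf (Lk k) (?u + Kk k *v ?x)"
    using key_identity[OF Mk_psd, of k ?x ?u] Snext_Mk[OF assms(2)] by (simp add: Lk_def Kk_def)
  moreover have "?u + Kk k *v ?x = ak U k \<omega> + Kk k *v ek k \<omega>"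
    by (simp add: ak_def ek_def Xp_def algebra_simps)
  moreover have "qf (Lk k) (ak U k \<omega> + Kk k *v ek k \<omega>) =
     qf (Lk k) (ak U k \<omega>) + 2 * (ak U k \<omega> \<bullet> (Lk k *v (Kk k *v ek k \<omega>))) + qf (Lk k) (Kk k *v ek k \<omega>)"
    by (rule qf_add_vec[OF Lk_sym])
  ultimately show ?thesis by simp
qed

end


lemma int7:
  fixes f1 f2 f3 f4 f5 f6 f7 :: "'a \<Rightarrow> real"
  assumes "integrable M f1" "integrable M f2" "integrable M f3" "integrable M f4"
    "integrable M f5" "integrable M f6" "integrable M f7"
  shows "integral\<^sup>L M (\<lambda>x. f1 x - f2 x + 2 * f3 x + f4 x + f5 x + 2 * f6 x + f7 x) =
    integral\<^sup>L M f1 - integral\<^sup>L M f2 + 2 * integral\<^sup>L M f3 + integral\<^sup>L M f4 + integral\<^sup>L M f5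
    + 2 * integral\<^sup>L M f6 + integral\<^sup>L M f7"
  by (intro has_bochner_integral_integral_eq has_bochner_integral_add has_bochner_integral_diff
      has_bochner_integral_mult_right has_bochner_integral_integrable assms)

context lqg
begin

definition goodU :: "(nat \<Rightarrow> 'a \<Rightarrow> real^'r) \<Rightarrow> bool" where
  "goodU U \<longleftrightarrow> (\<forall>j k. 1 \<le> j \<longrightarrow> j \<le> k \<longrightarrow> k \<le> \<kappa> \<longrightarrow> U j \<in> borel_measurable (SG k))"

definition sqU :: "(nat \<Rightarrow> 'a \<Rightarrow> real^'r) \<Rightarrow> bool" where
  "sqU U \<longleftrightarrow> (\<forall>j. 1 \<le> j \<longrightarrow> j \<le> \<kappa> \<longrightarrow> vsqi (U j))"

lemma Xp_vsqi: "sqU U \<Longrightarrow> k \<le> Suc \<kappa> \<Longrightarrow> vsqi (Xp U k)"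
  unfolding Xp_def sqU_def by (intro vsqi_add xf_vsqi cp_vsqi) auto

lemma ak_vsqi: "sqU U \<Longrightarrow> 1 \<le> k \<Longrightarrow> k \<le> \<kappa> \<Longrightarrow> vsqi (ak U k)"
  unfolding ak_def sqU_def by (intro vsqi_add vsqi_mv ef_vsqi cp_vsqi) auto

lemma Xp_Hk: "goodU U \<Longrightarrow> k \<le> \<kappa> \<Longrightarrow> Xp U k \<in> borel_measurable (Hk k)"
  unfolding Xp_def goodU_def
  by (intro borel_measurable_add xf_Hk order_refl cp_meas SG_Hk_meas) auto

lemma ak_SG: "goodU U \<Longrightarrow> 1 \<le> k \<Longrightarrow> k \<le> \<kappa> \<Longrightarrow> ak U k \<in> borel_measurable (SG k)"
  unfolding ak_def goodU_def
  by (intro borel_measurable_add mv_meas ef_SG order_refl cp_meas) auto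

lemma cross_w_zero:
  assumes g: "goodU U" and s: "sqU U" and k: "1 \<le> k" "k \<le> \<kappa>"
  shows "integral\<^sup>L M (\<lambda>\<omega>. (A *v Xp U k \<omega> + B *v U k \<omega>) \<bullet> (Mk k *v w k \<omega>)) = 0"
proof -
  let ?z = "\<lambda>\<omega>. A *v Xp U k \<omega> + B *v U k \<omega>"
  let ?f = "\<lambda>c \<omega>. (transpose (Mk k) *v ?z \<omega>) $ c"
  have zv: "vsqi ?z" using s k by (intro vsqi_add vsqi_mv Xp_vsqi) (auto simp: sqU_def)
  have xm: "Xp U k \<in> borel_measurable (Hk k)" by (rule Xp_Hk[OF g k(2)])
  have um: "U k \<in> borel_measurable (Hk k)" using g k by (intro SG_Hk_meas) (simp add: goodU_def)
  have zm: "?z \<in> borel_measurable (Hk k)"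
    by (intro borel_measurable_add mv_meas xm um)
  have "integral\<^sup>L M (\<lambda>\<omega>. ?z \<omega> \<bullet> (Mk k *v w k \<omega>)) = integral\<^sup>L M (\<lambda>\<omega>. \<Sum>c\<in>UNIV. ?f c \<omega> * w k \<omega> $ c)"
    by (simp only: inner_as_sum_tr)
  also have "\<dots> = (\<Sum>c\<in>UNIV. integral\<^sup>L M (\<lambda>\<omega>. ?f c \<omega> * w k \<omega> $ c))"
    using vsqi_mv[OF zv, of "transpose (Mk k)"] w_vsqi[of k]
    by (intro Bochner_Integration.integral_sum sqi_mult) (auto simp: vsqi_def)
  also have "\<dots> = 0"
  proof (intro sum.neutral ballI)
    fix c
    have fm: "(\<lambda>\<omega>. ?f c \<omega>) \<in> borel_measurable (Hk k)" by (intro vec_nth_meas mv_meas zm)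
    have fs: "sqi (\<lambda>\<omega>. ?f c \<omega>)" using vsqi_mv[OF zv, of "transpose (Mk k)"] unfolding vsqi_def by blast
    show "integral\<^sup>L M (\<lambda>\<omega>. ?f c \<omega> * w k \<omega> $ c) = 0"
      by (rule orth_w[OF fm fs])
  qed
  finally show ?thesis .
qed

lemma cross_e_zero:
  assumes g: "goodU U" and s: "sqU U" and k: "1 \<le> k" "k \<le> \<kappa>"
  shows "integral\<^sup>L M (\<lambda>\<omega>. ak U k \<omega> \<bullet> (Lk k *v (Kk k *v ek k \<omega>))) = 0"
proof -
  let ?N = "Lk k ** Kk k"
  let ?f = "\<lambda>c \<omega>. (transpose ?N *v ak U k \<omega>) $ c"
  have av: "vsqi (ak U k)" using ak_vsqi[OF s k] .
  have am: "ak U k \<in> borel_measurable (SG k)" using ak_SG[OF g k] .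
  have "integral\<^sup>L M (\<lambda>\<omega>. ak U k \<omega> \<bullet> (Lk k *v (Kk k *v ek k \<omega>))) =
        integral\<^sup>L M (\<lambda>\<omega>. \<Sum>c\<in>UNIV. ?f c \<omega> * ek k \<omega> $ c)"
    by (simp only: matrix_vector_mul_assoc inner_as_sum_tr)
  also have "\<dots> = (\<Sum>c\<in>UNIV. integral\<^sup>L M (\<lambda>\<omega>. ?f c \<omega> * ek k \<omega> $ c))"
    using vsqi_mv[OF av, of "transpose ?N"] ek_vsqi[of k]
    by (intro Bochner_Integration.integral_sum sqi_mult) (auto simp: vsqi_def)
  also have "\<dots> = 0"
  proof (intro sum.neutral ballI)
    fix c
    have fm: "(\<lambda>\<omega>. ?f c \<omega>) \<in> borel_measurable (SG k)" by (intro vec_nth_meas mv_meas am)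
    have fs: "sqi (\<lambda>\<omega>. ?f c \<omega>)" using vsqi_mv[OF av, of "transpose ?N"] unfolding vsqi_def by blast
    have "integral\<^sup>L M (\<lambda>\<omega>. ?f c \<omega> * (xf k \<omega> $ c - ef k \<omega> $ c)) = 0"
      using k by (intro orth_e[OF _ fm fs]) auto
    then show "integral\<^sup>L M (\<lambda>\<omega>. ?f c \<omega> * ek k \<omega> $ c) = 0" by (simp add: ek_def)
  qed
  finally show ?thesis .
qed

lemma per_k:
  assumes g: "goodU U" and s: "sqU U" and k: "1 \<le> k" "k \<le> \<kappa>"
  shows "integral\<^sup>L M (\<lambda>\<omega>. qf Q (Xp U (Suc k) \<omega>)) + integral\<^sup>L M (\<lambda>\<omega>. qf R (U k \<omega>)) =
     (integral\<^sup>L M (\<lambda>\<omega>. qf (Sr (Suc \<kappa> - k)) (Xp U k \<omega>)) - integral\<^sup>L M (\<lambda>\<omega>. qf (Sr (Suc \<kappa> - Suc k)) (Xp U (Suc k) \<omega>)))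
     + (integral\<^sup>L M (\<lambda>\<omega>. qf (Mk k) (w k \<omega>)) + integral\<^sup>L M (\<lambda>\<omega>. qf (Lk k) (Kk k *v ek k \<omega>)))
     + integral\<^sup>L M (\<lambda>\<omega>. qf (Lk k) (ak U k \<omega>))"
proof -
  have X1: "vsqi (Xp U k)" "vsqi (Xp U (Suc k))" using k by (auto intro!: Xp_vsqi[OF s])
  have Uv: "vsqi (U k)" using s k by (simp add: sqU_def)
  have av: "vsqi (ak U k)" by (rule ak_vsqi[OF s k])
  have ev: "vsqi (\<lambda>\<omega>. Kk k *v ek k \<omega>)" by (intro vsqi_mv ek_vsqi)
  note ints = vsqi_qf_integrable[OF X1(1)] vsqi_qf_integrable[OF X1(2)] vsqi_qf_integrable[OF Uv]
     vsqi_qf_integrable[OF w_vsqi] vsqi_qf_integrable[OF av] vsqi_qf_integrable[OF ev]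
     vsqi_inner_integrable[OF vsqi_add[OF vsqi_mv[OF X1(1)] vsqi_mv[OF Uv]] vsqi_mv[OF w_vsqi]]
     vsqi_inner_integrable[OF av vsqi_mv[OF ev]]
  have "integral\<^sup>L M (\<lambda>\<omega>. qf Q (Xp U (Suc k) \<omega>)) + integral\<^sup>L M (\<lambda>\<omega>. qf R (U k \<omega>)) =
        integral\<^sup>L M (\<lambda>\<omega>. qf Q (Xp U (Suc k) \<omega>) + qf R (U k \<omega>))"
    using ints by simp
  also have "\<dots> = integral\<^sup>L M (\<lambda>\<omega>.
     qf (Sr (Suc (\<kappa> - k))) (Xp U k \<omega>) - qf (Sr (\<kappa> - k)) (Xp U (Suc k) \<omega>)
     + 2 * ((A *v Xp U k \<omega> + B *v U k \<omega>) \<bullet> (Mk k *v w k \<omega>)) + qf (Mk k) (w k \<omega>)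
     + qf (Lk k) (ak U k \<omega>) + 2 * (ak U k \<omega> \<bullet> (Lk k *v (Kk k *v ek k \<omega>))) + qf (Lk k) (Kk k *v ek k \<omega>))"
    using pointwise_identity[OF k] by (simp del: Sr.simps)
  also have "\<dots> = integral\<^sup>L M (\<lambda>\<omega>. qf (Sr (Suc (\<kappa> - k))) (Xp U k \<omega>)) - integral\<^sup>L M (\<lambda>\<omega>. qf (Sr (\<kappa> - k)) (Xp U (Suc k) \<omega>))
     + 2 * integral\<^sup>L M (\<lambda>\<omega>. (A *v Xp U k \<omega> + B *v U k \<omega>) \<bullet> (Mk k *v w k \<omega>)) + integral\<^sup>L M (\<lambda>\<omega>. qf (Mk k) (w k \<omega>))
     + integral\<^sup>L M (\<lambda>\<omega>. qf (Lk k) (ak U k \<omega>)) + 2 * integral\<^sup>L M (\<lambda>\<omega>. ak U k \<omega> \<bullet> (Lk k *v (Kk k *v ek k \<omega>)))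
     + integral\<^sup>L M (\<lambda>\<omega>. qf (Lk k) (Kk k *v ek k \<omega>))"
    by (rule int7) (rule ints)+
  also have "\<dots> = integral\<^sup>L M (\<lambda>\<omega>. qf (Sr (Suc (\<kappa> - k))) (Xp U k \<omega>)) - integral\<^sup>L M (\<lambda>\<omega>. qf (Sr (\<kappa> - k)) (Xp U (Suc k) \<omega>))
     + integral\<^sup>L M (\<lambda>\<omega>. qf (Mk k) (w k \<omega>))
     + integral\<^sup>L M (\<lambda>\<omega>. qf (Lk k) (ak U k \<omega>))
     + integral\<^sup>L M (\<lambda>\<omega>. qf (Lk k) (Kk k *v ek k \<omega>))"
    using cross_w_zero[OF g s k] cross_e_zero[OF g s k] by (simp del: Sr.simps)
  finally show ?thesis using k by (simp del: Sr.simps add: Suc_diff_le)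
qed

lemma cost_sum:
  assumes g: "goodU U" and s: "sqU U"
  shows "(\<Sum>k\<in>{1..\<kappa>}. integral\<^sup>L M (\<lambda>\<omega>. qf Q (Xp U (Suc k) \<omega>)) + integral\<^sup>L M (\<lambda>\<omega>. qf R (U k \<omega>))) =
         C0 + (\<Sum>k\<in>{1..\<kappa>}. integral\<^sup>L M (\<lambda>\<omega>. qf (Lk k) (ak U k \<omega>)))"
proof -
  let ?g = "\<lambda>k. integral\<^sup>L M (\<lambda>\<omega>. qf (Sr (Suc \<kappa> - k)) (Xp U k \<omega>))"
  have "(\<Sum>k\<in>{1..\<kappa>}. integral\<^sup>L M (\<lambda>\<omega>. qf Q (Xp U (Suc k) \<omega>)) + integral\<^sup>L M (\<lambda>\<omega>. qf R (U k \<omega>))) =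
        (\<Sum>k\<in>{1..\<kappa>}. (?g k - ?g (Suc k))
          + (integral\<^sup>L M (\<lambda>\<omega>. qf (Mk k) (w k \<omega>)) + integral\<^sup>L M (\<lambda>\<omega>. qf (Lk k) (Kk k *v ek k \<omega>)))
          + integral\<^sup>L M (\<lambda>\<omega>. qf (Lk k) (ak U k \<omega>)))"
    by (intro sum.cong refl per_k[OF g s]) auto
  also have "\<dots> = (?g 1 - ?g (Suc \<kappa>))
     + (\<Sum>k\<in>{1..\<kappa>}. integral\<^sup>L M (\<lambda>\<omega>. qf (Mk k) (w k \<omega>)) + integral\<^sup>L M (\<lambda>\<omega>. qf (Lk k) (Kk k *v ek k \<omega>)))
     + (\<Sum>k\<in>{1..\<kappa>}. integral\<^sup>L M (\<lambda>\<omega>. qf (Lk k) (ak U k \<omega>)))"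
    using sum_telescope1[of ?g \<kappa>] by (simp only: sum.distrib)
  also have "?g 1 = integral\<^sup>L M (\<lambda>\<omega>. qf (Sr \<kappa>) (x1 \<omega>))" by (simp add: Xp_def)
  also have "?g (Suc \<kappa>) = 0" by simp
  finally show ?thesis by (simp add: C0_def)
qed

end


context lqg
begin

lemma qfQ_nonneg: "0 \<le> qf Q z" using psdQ by (simp add: psd_mat_def qf_def)
lemma qfR_nonneg: "0 \<le> qf R z" using pdR unfolding pd_mat_def qf_def
  by (metis inner_zero_left order_less_imp_le order_refl)
lemma qf_psd_nonneg: "psd_mat P \<Longrightarrow> 0 \<le> qf P z" by (simp add: psd_mat_def qf_def)
lemma qf_pd_nonneg: "pd_mat P \<Longrightarrow> 0 \<le> qf P z" unfolding pd_mat_def qf_def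
  by (metis inner_zero_left order_less_imp_le order_refl)

lemma C0_nonneg: "0 \<le> C0"
  unfolding C0_def
  by (intro add_nonneg_nonneg sum_nonneg integral_nonneg_AE AE_I2 qf_psd_nonneg qf_pd_nonneg
       Sr_psd Mk_psd Lk_pd)

lemma state_Xp: "state A B C x1 w v sig \<gamma> (Suc k) \<omega> = Xp (\<lambda>j \<omega>. control A B C x1 w v sig \<gamma> j \<omega>) (Suc k) \<omega>"
  unfolding Xp_def by (rule state_decomp) simp

lemma nn_eq: "integrable M f \<Longrightarrow> (\<And>x. 0 \<le> f x) \<Longrightarrow> (\<integral>\<^sup>+x. ennreal (f x) \<partial>M) = ennreal (integral\<^sup>L M f)"
  by (rule nn_integral_eq_integral) auto

lemma UC_eq:
  fixes sig :: "nat \<Rightarrow> (nat \<Rightarrow> real^'n) \<Rightarrow> 'a \<Rightarrow> 's" and \<gamma> :: "nat \<Rightarrow> (nat \<Rightarrow> 's) \<Rightarrow> real^'r"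
  defines "U \<equiv> (\<lambda>j \<omega>. control A B C x1 w v sig \<gamma> j \<omega>)"
  assumes g: "goodU U" and s: "sqU U"
  shows "UC M A B C x1 w v \<kappa> sig Q R \<gamma> = ennreal (C0 + (\<Sum>k\<in>{1..\<kappa>}. integral\<^sup>L M (\<lambda>\<omega>. qf (Lk k) (ak U k \<omega>))))"
proof -
  have sc: "state_cost M A B C x1 w v \<kappa> sig Q \<gamma> = ennreal (\<Sum>k\<in>{1..\<kappa>}. integral\<^sup>L M (\<lambda>\<omega>. qf Q (Xp U (Suc k) \<omega>)))"
  proof -
    have "state_cost M A B C x1 w v \<kappa> sig Q \<gamma> = (\<Sum>k\<in>{1..\<kappa>}. ennreal (integral\<^sup>L M (\<lambda>\<omega>. qf Q (Xp U (Suc k) \<omega>))))"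
      unfolding state_cost_def
    proof (intro sum.cong refl)
      fix k assume k: "k \<in> {1..\<kappa>}"
      have "(\<integral>\<^sup>+\<omega>. ennreal (qf Q (state A B C x1 w v sig \<gamma> (k + 1) \<omega>)) \<partial>M) =
            (\<integral>\<^sup>+\<omega>. ennreal (qf Q (Xp U (Suc k) \<omega>)) \<partial>M)"
        by (simp add: state_Xp U_def)
      also have "\<dots> = ennreal (integral\<^sup>L M (\<lambda>\<omega>. qf Q (Xp U (Suc k) \<omega>)))"
        using k by (intro nn_eq vsqi_qf_integrable Xp_vsqi[OF s] qfQ_nonneg) auto
      finally show "(\<integral>\<^sup>+\<omega>. ennreal (qf Q (state A B C x1 w v sig \<gamma> (k + 1) \<omega>)) \<partial>M) =
            ennreal (integral\<^sup>L M (\<lambda>\<omega>. qf Q (Xp U (Suc k) \<omega>)))" .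
    qed
    also have "\<dots> = ennreal (\<Sum>k\<in>{1..\<kappa>}. integral\<^sup>L M (\<lambda>\<omega>. qf Q (Xp U (Suc k) \<omega>)))"
      by (intro sum_ennreal integral_nonneg_AE AE_I2 qfQ_nonneg)
    finally show ?thesis .
  qed
  have cc: "control_cost M A B C x1 w v \<kappa> sig R \<gamma> = ennreal (\<Sum>k\<in>{1..\<kappa>}. integral\<^sup>L M (\<lambda>\<omega>. qf R (U k \<omega>)))"
  proof -
    have "control_cost M A B C x1 w v \<kappa> sig R \<gamma> = (\<Sum>k\<in>{1..\<kappa>}. ennreal (integral\<^sup>L M (\<lambda>\<omega>. qf R (U k \<omega>))))"
      unfolding control_cost_def U_def[symmetric]
      using s by (intro sum.cong refl nn_eq vsqi_qf_integrable qfR_nonneg) (auto simp: sqU_def)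
    also have "\<dots> = ennreal (\<Sum>k\<in>{1..\<kappa>}. integral\<^sup>L M (\<lambda>\<omega>. qf R (U k \<omega>)))"
      by (intro sum_ennreal integral_nonneg_AE AE_I2 qfR_nonneg)
    finally show ?thesis .
  qed
  have "UC M A B C x1 w v \<kappa> sig Q R \<gamma> = ennreal ((\<Sum>k\<in>{1..\<kappa>}. integral\<^sup>L M (\<lambda>\<omega>. qf Q (Xp U (Suc k) \<omega>)))
       + (\<Sum>k\<in>{1..\<kappa>}. integral\<^sup>L M (\<lambda>\<omega>. qf R (U k \<omega>))))"
    unfolding UC_def sc cc
    by (intro ennreal_plus[symmetric] sum_nonneg integral_nonneg_AE AE_I2 qfQ_nonneg qfR_nonneg)
  also have "(\<Sum>k\<in>{1..\<kappa>}. integral\<^sup>L M (\<lambda>\<omega>. qf Q (Xp U (Suc k) \<omega>)))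
       + (\<Sum>k\<in>{1..\<kappa>}. integral\<^sup>L M (\<lambda>\<omega>. qf R (U k \<omega>))) =
       C0 + (\<Sum>k\<in>{1..\<kappa>}. integral\<^sup>L M (\<lambda>\<omega>. qf (Lk k) (ak U k \<omega>)))"
    using cost_sum[OF g s] by (simp add: sum.distrib)
  finally show ?thesis .
qed

lemma sq_of_finite:
  fixes sig :: "nat \<Rightarrow> (nat \<Rightarrow> real^'n) \<Rightarrow> 'a \<Rightarrow> 's" and \<gamma> :: "nat \<Rightarrow> (nat \<Rightarrow> 's) \<Rightarrow> real^'r"
  defines "U \<equiv> (\<lambda>j \<omega>. control A B C x1 w v sig \<gamma> j \<omega>)"
  assumes g: "goodU U" and fin: "UC M A B C x1 w v \<kappa> sig Q R \<gamma> < \<infinity>"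
  shows "sqU U"
  unfolding sqU_def
proof (intro allI impI)
  fix k assume k: "1 \<le> k" "k \<le> \<kappa>"
  obtain c where c: "c > 0" "\<And>z. c * (z \<bullet> z) \<le> qf R z" using pd_lower[OF pdR] by blast
  have Um: "U k \<in> borel_measurable M" using g k by (intro SG_M_meas[of _ k]) (simp add: goodU_def)
  have "control_cost M A B C x1 w v \<kappa> sig R \<gamma> \<le> UC M A B C x1 w v \<kappa> sig Q R \<gamma>"
    unfolding UC_def by (intro add_increasing) auto
  then have "control_cost M A B C x1 w v \<kappa> sig R \<gamma> < \<infinity>"
    using fin by (rule le_less_trans)
  then have fR: "(\<integral>\<^sup>+\<omega>. ennreal (qf R (U k \<omega>)) \<partial>M) < \<infinity>"
    unfolding control_cost_def U_def[symmetric] using k by (simp add: less_top[symmetric])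
  show "vsqi (U k)" unfolding vsqi_def sqi_def
  proof (intro allI conjI)
    fix i
    show mi: "(\<lambda>\<omega>. U k \<omega> $ i) \<in> borel_measurable M" using Um by (rule vec_nth_meas)
    have le: "(U k \<omega> $ i)\<^sup>2 \<le> qf R (U k \<omega>) / c" for \<omega>
    proof -
      have "(U k \<omega> $ i)\<^sup>2 \<le> U k \<omega> \<bullet> U k \<omega>"
        unfolding inner_vec_def inner_real_def power2_eq_square
        by (rule member_le_sum[where f="\<lambda>j. U k \<omega> $ j * U k \<omega> $ j" and i=i]) auto
      also have "\<dots> \<le> qf R (U k \<omega>) / c" using c(2)[of "U k \<omega>"] c(1) by (simp add: field_simps)
      finally show ?thesis .
    qed
    have "(\<integral>\<^sup>+\<omega>. ennreal (norm ((U k \<omega> $ i)\<^sup>2)) \<partial>M) \<le> (\<integral>\<^sup>+\<omega>. ennreal (1/c) * ennreal (qf R (U k \<omega>)) \<partial>M)"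
      using le c(1) qfR_nonneg
      by (intro nn_integral_mono) (simp add: ennreal_mult'[symmetric] divide_inverse mult.commute)
    also have "\<dots> = ennreal (1/c) * (\<integral>\<^sup>+\<omega>. ennreal (qf R (U k \<omega>)) \<partial>M)"
      using Um by (intro nn_integral_cmult) (simp add: qf_def)
    also have "\<dots> < \<infinity>" using fR by (simp add: ennreal_mult_less_top)
    finally show "integrable M (\<lambda>\<omega>. (U k \<omega> $ i)\<^sup>2)"
      using mi by (intro integrableI_bounded) auto
  qed
qed

lemma sum_qfL_nonneg: "0 \<le> (\<Sum>k\<in>{1..\<kappa>}. integral\<^sup>L M (\<lambda>\<omega>. qf (Lk k) (ak U k \<omega>)))"
  by (intro sum_nonneg integral_nonneg_AE AE_I2 qf_pd_nonneg Lk_pd)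

lemma UC_lower:
  fixes sig :: "nat \<Rightarrow> (nat \<Rightarrow> real^'n) \<Rightarrow> 'a \<Rightarrow> 's" and \<gamma> :: "nat \<Rightarrow> (nat \<Rightarrow> 's) \<Rightarrow> real^'r"
  defines "U \<equiv> (\<lambda>j \<omega>. control A B C x1 w v sig \<gamma> j \<omega>)"
  assumes g: "goodU U"
  shows "ennreal C0 \<le> UC M A B C x1 w v \<kappa> sig Q R \<gamma>"
proof (cases "UC M A B C x1 w v \<kappa> sig Q R \<gamma> < \<infinity>")
  case True
  then have s: "sqU U" using sq_of_finite g unfolding U_def by blast
  show ?thesis unfolding UC_eq[OF g[unfolded U_def] s[unfolded U_def]] U_def[symmetric]
    using sum_qfL_nonneg[of U] C0_nonneg by simp
next
  case False then show ?thesis by (simp add: not_less top_unique)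
qed

lemma UC_opt:
  fixes sig :: "nat \<Rightarrow> (nat \<Rightarrow> real^'n) \<Rightarrow> 'a \<Rightarrow> 's" and \<gamma> :: "nat \<Rightarrow> (nat \<Rightarrow> 's) \<Rightarrow> real^'r"
  defines "U \<equiv> (\<lambda>j \<omega>. control A B C x1 w v sig \<gamma> j \<omega>)"
  assumes g: "goodU U" and le: "UC M A B C x1 w v \<kappa> sig Q R \<gamma> \<le> ennreal C0"
  shows "AE \<omega> in M. \<forall>k\<in>{1..\<kappa>}. ak U k \<omega> = 0"
proof -
  have "UC M A B C x1 w v \<kappa> sig Q R \<gamma> < \<infinity>" using le by (simp add: le_less_trans)
  then have s: "sqU U" using sq_of_finite g unfolding U_def by blast
  have "ennreal (C0 + (\<Sum>k\<in>{1..\<kappa>}. integral\<^sup>L M (\<lambda>\<omega>. qf (Lk k) (ak U k \<omega>)))) \<le> ennreal C0"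
    using le UC_eq[OF g[unfolded U_def] s[unfolded U_def]] unfolding U_def by simp
  then have "(\<Sum>k\<in>{1..\<kappa>}. integral\<^sup>L M (\<lambda>\<omega>. qf (Lk k) (ak U k \<omega>))) \<le> 0"
    using C0_nonneg by simp
  then have z: "\<forall>k\<in>{1..\<kappa>}. integral\<^sup>L M (\<lambda>\<omega>. qf (Lk k) (ak U k \<omega>)) = 0"
    using sum_nonneg_eq_0_iff[of "{1..\<kappa>}" "\<lambda>k. integral\<^sup>L M (\<lambda>\<omega>. qf (Lk k) (ak U k \<omega>))"]
      sum_qfL_nonneg[of U]
    by (simp add: integral_nonneg_AE qf_pd_nonneg Lk_pd)
  show ?thesis
  proof (intro AE_finite_allI finite_atLeastAtMost)
    fix k assume k: "k \<in> {1..\<kappa>}"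
    have "AE \<omega> in M. qf (Lk k) (ak U k \<omega>) = 0"
      using z k ak_vsqi[OF s] 
      by (subst integral_nonneg_eq_0_iff_AE[symmetric]) (auto intro!: vsqi_qf_integrable qf_pd_nonneg Lk_pd)
    then show "AE \<omega> in M. ak U k \<omega> = 0"
      by eventually_elim (use Lk_pd[of k] in \<open>auto simp: pd_mat_def qf_def\<close>)
  qed
qed

end


lemma cost_cong:
  assumes ae: "AE \<omega> in M. \<forall>k\<in>{1..\<kappa>}. control A B C x1 w v sig \<gamma> k \<omega> = control A B C x1 w v sig' \<gamma>' k \<omega>"
  shows "state_cost M A B C x1 w v \<kappa> sig Q \<gamma> = state_cost M A B C x1 w v \<kappa> sig' Q \<gamma>'"
    "control_cost M A B C x1 w v \<kappa> sig R \<gamma> = control_cost M A B C x1 w v \<kappa> sig' R \<gamma>'"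
    "UC M A B C x1 w v \<kappa> sig Q R \<gamma> = UC M A B C x1 w v \<kappa> sig' Q R \<gamma>'"
proof -
  have st: "AE \<omega> in M. \<forall>k\<in>{1..\<kappa>}. state A B C x1 w v sig \<gamma> (k + 1) \<omega> = state A B C x1 w v sig' \<gamma>' (k + 1) \<omega>"
    using ae
  proof eventually_elim
    case (elim \<omega>)
    show ?case
    proof
      fix k assume k: "k \<in> {1..\<kappa>}"
      have "cp A B (k + 1) (\<lambda>j. control A B C x1 w v sig \<gamma> j \<omega>) = cp A B (k + 1) (\<lambda>j. control A B C x1 w v sig' \<gamma>' j \<omega>)"
        using elim k by (intro cp_cong1) auto
      then show "state A B C x1 w v sig \<gamma> (k + 1) \<omega> = state A B C x1 w v sig' \<gamma>' (k + 1) \<omega>"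
        by (simp add: state_decomp)
    qed
  qed
  show s: "state_cost M A B C x1 w v \<kappa> sig Q \<gamma> = state_cost M A B C x1 w v \<kappa> sig' Q \<gamma>'"
    unfolding state_cost_def
  proof (intro sum.cong refl nn_integral_cong_AE)
    fix k assume k: "k \<in> {1..\<kappa>}"
    from st show "AE \<omega> in M. ennreal (qf Q (state A B C x1 w v sig \<gamma> (k + 1) \<omega>)) =
        ennreal (qf Q (state A B C x1 w v sig' \<gamma>' (k + 1) \<omega>))"
      by eventually_elim (use k in simp)
  qed
  show c: "control_cost M A B C x1 w v \<kappa> sig R \<gamma> = control_cost M A B C x1 w v \<kappa> sig' R \<gamma>'"
    unfolding control_cost_def
  proof (intro sum.cong refl nn_integral_cong_AE)
    fix k assume k: "k \<in> {1..\<kappa>}"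
    from ae show "AE \<omega> in M. ennreal (qf R (control A B C x1 w v sig \<gamma> k \<omega>)) =
        ennreal (qf R (control A B C x1 w v sig' \<gamma>' k \<omega>))"
      by eventually_elim (use k in simp)
  qed
  show "UC M A B C x1 w v \<kappa> sig Q R \<gamma> = UC M A B C x1 w v \<kappa> sig' Q R \<gamma>'"
    unfolding UC_def s c ..
qed

context lqg
begin

lemma ak_zero_iff: "ak U k \<omega> = 0 \<longleftrightarrow> U k \<omega> = - (Kk k *v (ef k \<omega> + cp A B k (\<lambda>j. U j \<omega>)))"
  unfolding ak_def by (rule add_eq_0_iff2)

lemma sq_of_rec:
  assumes rec: "\<And>k \<omega>. 1 \<le> k \<Longrightarrow> k \<le> \<kappa> \<Longrightarrow> ak U k \<omega> = 0"
  shows "sqU U"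
proof -
  have "1 \<le> k \<longrightarrow> k \<le> \<kappa> \<longrightarrow> vsqi (U k)" for k
  proof (induction k rule: less_induct)
    case (less k)
    show ?case
    proof (intro impI)
      assume k: "1 \<le> k" "k \<le> \<kappa>"
      have "U k = (\<lambda>\<omega>. - (Kk k *v (ef k \<omega> + cp A B k (\<lambda>j. U j \<omega>))))"
        using rec[OF k] by (simp add: ak_zero_iff fun_eq_iff)
      moreover have "vsqi (\<lambda>\<omega>. - (Kk k *v (ef k \<omega> + cp A B k (\<lambda>j. U j \<omega>))))"
        using less k by (intro vsqi_uminus vsqi_mv vsqi_add ef_vsqi cp_vsqi) auto
      ultimately show "vsqi (U k)" by simp
    qed
  qed
  then show ?thesis by (simp add: sqU_def)
qed

lemma UC_attain:
  fixes sig :: "nat \<Rightarrow> (nat \<Rightarrow> real^'n) \<Rightarrow> 'a \<Rightarrow> 's" and \<gamma> :: "nat \<Rightarrow> (nat \<Rightarrow> 's) \<Rightarrow> real^'r"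
  defines "U \<equiv> (\<lambda>j \<omega>. control A B C x1 w v sig \<gamma> j \<omega>)"
  assumes g: "goodU U" and rec: "\<And>k \<omega>. 1 \<le> k \<Longrightarrow> k \<le> \<kappa> \<Longrightarrow> ak U k \<omega> = 0"
  shows "UC M A B C x1 w v \<kappa> sig Q R \<gamma> = ennreal C0"
proof -
  have s: "sqU U" by (rule sq_of_rec[OF rec])
  show ?thesis unfolding UC_eq[OF g[unfolded U_def] s[unfolded U_def]] U_def[symmetric]
    using rec by (simp add: qf_def)
qed

lemma rec_unique:
  assumes "\<forall>k\<in>{1..\<kappa>}. ak U k \<omega> = 0" "\<forall>k\<in>{1..\<kappa>}. ak U' k \<omega> = 0"
  shows "\<forall>k\<in>{1..\<kappa>}. U k \<omega> = U' k \<omega>"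
proof -
  have "1 \<le> k \<longrightarrow> k \<le> \<kappa> \<longrightarrow> U k \<omega> = U' k \<omega>" for k
  proof (induction k rule: less_induct)
    case (less k)
    show ?case
    proof (intro impI)
      assume k: "1 \<le> k" "k \<le> \<kappa>"
      have "cp A B k (\<lambda>j. U j \<omega>) = cp A B k (\<lambda>j. U' j \<omega>)"
        using less k by (intro cp_cong1) auto
      then show "U k \<omega> = U' k \<omega>"
        using assms k by (simp add: ak_zero_iff)
    qed
  qed
  then show ?thesis by auto
qed

end


fun useq :: "(nat \<Rightarrow> (nat \<Rightarrow> 'v) \<Rightarrow> 'h \<Rightarrow> 'v) \<Rightarrow> nat \<Rightarrow> 'h \<Rightarrow> nat \<Rightarrow> 'v::zero" where
  "useq f 0 h = (\<lambda>_. 0)"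
| "useq f (Suc k) h = (useq f k h)(Suc k := f (Suc k) (useq f k h) h)"

lemma useq_upto: "m \<le> k \<Longrightarrow> useq f k h m = useq f m h m"
proof (induction k)
  case 0 then show ?case by simp
next
  case (Suc k)
  show ?case
  proof (cases "m = Suc k")
    case True then show ?thesis by simp
  next
    case False
    then have "m \<le> k" using Suc.prems by simp
    have "useq f (Suc k) h m = useq f k h m" using False by simp
    also have "\<dots> = useq f m h m" by (rule Suc.IH[OF \<open>m \<le> k\<close>])
    finally show ?thesis .
  qed
qed

lemma useq_hcong:
  assumes F2: "\<And>k V h h'. (\<And>j. 1 \<le> j \<Longrightarrow> j \<le> k \<Longrightarrow> h j = h' j) \<Longrightarrow> f k V h = f k V h'"
  shows "(\<And>j. 1 \<le> j \<Longrightarrow> j \<le> k \<Longrightarrow> h j = h' j) \<Longrightarrow> useq f k h = useq f k h'"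
proof (induction k)
  case 0 then show ?case by simp
next
  case (Suc k)
  have "useq f k h = useq f k h'" using Suc by simp
  moreover have "f (Suc k) (useq f k h') h = f (Suc k) (useq f k h') h'"
    using Suc.prems by (intro F2) auto
  ultimately show ?case by simp
qed

lemma useq_meas:
  assumes F3: "\<And>k V. (\<And>m. V m \<in> borel_measurable P) \<Longrightarrow> (\<lambda>h. f k (\<lambda>m. V m h) h) \<in> borel_measurable P"
  shows "(\<lambda>h. useq f k h m) \<in> borel_measurable P"
proof (induction k arbitrary: m)
  case 0 then show ?case by simp
next
  case (Suc k)
  show ?case
  proof (cases "m = Suc k")
    case True
    have "(\<lambda>h. f (Suc k) (\<lambda>m. useq f k h m) h) \<in> borel_measurable P"
      by (rule F3) (rule Suc.IH)
    then show ?thesis using True by simp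
  next
    case False then show ?thesis using Suc.IH[of m] by simp
  qed
qed

lemma gstar_closed:
  assumes F1: "\<And>k V V' h. (\<And>m. 1 \<le> m \<Longrightarrow> m < k \<Longrightarrow> V m = V' m) \<Longrightarrow> f k V h = f k V' h"
    and F2: "\<And>k V h h'. (\<And>j. 1 \<le> j \<Longrightarrow> j \<le> k \<Longrightarrow> h j = h' j) \<Longrightarrow> f k V h = f k V h'"
    and k: "1 \<le> k"
  shows "control A B C x1 w v sig (\<lambda>k h. useq f k h k) k \<omega> =
     f k (\<lambda>m. control A B C x1 w v sig (\<lambda>k h. useq f k h k) m \<omega>)
       (\<lambda>j. if 1 \<le> j \<and> j \<le> k then sig j (ymeas C v (\<lambda>i. state A B C x1 w v sig (\<lambda>k h. useq f k h k) i \<omega>) \<omega> j) \<omega> else undefined)"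
proof -
  define Hf where "Hf k = (\<lambda>j. if 1 \<le> j \<and> j \<le> k then sig j (ymeas C v (\<lambda>i. state A B C x1 w v sig (\<lambda>k h. useq f k h k) i \<omega>) \<omega> j) \<omega> else undefined)" for k
  have ce: "control A B C x1 w v sig (\<lambda>k h. useq f k h k) m \<omega> = useq f m (Hf m) m" for m
    unfolding Hf_def by (subst control_eq) simp
  obtain k' where k': "k = Suc k'" using k by (cases k) auto
  have "useq f k' (Hf k) m = control A B C x1 w v sig (\<lambda>k h. useq f k h k) m \<omega>" if m: "1 \<le> m" "m < k" for m
  proof -
    have "useq f k' (Hf k) m = useq f m (Hf k) m" using m k' by (intro useq_upto) simp
    also have "useq f m (Hf k) = useq f m (Hf m)"
      using m by (intro useq_hcong F2) (auto simp: Hf_def)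
    finally show ?thesis by (simp add: ce)
  qed
  then have "f k (useq f k' (Hf k)) (Hf k) = f k (\<lambda>m. control A B C x1 w v sig (\<lambda>k h. useq f k h k) m \<omega>) (Hf k)"
    by (intro F1) auto
  then show ?thesis using ce[of k] k' by (simp add: Hf_def)
qed

lemma LNlin_cong1: "(\<And>m. 1 \<le> m \<Longrightarrow> m < j \<Longrightarrow> V m = V' m) \<Longrightarrow> LNlin Lt A B C j V = LNlin Lt A B C j V'"
  unfolding LNlin_def
  by (intro ext if_cong refl sum.cong arg_cong[where f="\<lambda>z. _ *v (C *v z)"] cp_cong1) auto

lemma Klin_cong1: "(\<And>m. 1 \<le> m \<Longrightarrow> m < k \<Longrightarrow> V m = V' m) \<Longrightarrow> Klin Kc Lt A B C k V = Klin Kc Lt A B C k V'"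
  unfolding Klin_def
  by (intro sum.cong refl arg_cong[where f="\<lambda>z. _ *v z i" for i] LNlin_cong1) auto

lemma LNlin_meas: "(\<And>m. 1 \<le> m \<Longrightarrow> m < j \<Longrightarrow> V m \<in> borel_measurable F) \<Longrightarrow>
   (\<lambda>\<omega>. LNlin Lt A B C j (\<lambda>m. V m \<omega>) i) \<in> borel_measurable F"
proof (cases "1 \<le> i \<and> i \<le> j")
  case True
  assume a: "\<And>m. 1 \<le> m \<Longrightarrow> m < j \<Longrightarrow> V m \<in> borel_measurable F"
  have "(\<lambda>\<omega>. \<Sum>l\<in>{1..j}. Lt j i l *v (C *v cp A B l (\<lambda>m. V m \<omega>))) \<in> borel_measurable F"
    using a by (intro borel_measurable_sum mv_meas cp_meas) auto
  then show ?thesis using True by (simp add: LNlin_def)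
next
  case False then have "\<And>\<omega>. LNlin Lt A B C j (\<lambda>m. V m \<omega>) i = 0" by (auto simp: LNlin_def)
  then show ?thesis by simp
qed

lemma Klin_meas: "(\<And>m. 1 \<le> m \<Longrightarrow> m < k \<Longrightarrow> V m \<in> borel_measurable F) \<Longrightarrow>
   (\<lambda>\<omega>. Klin Kc Lt A B C k (\<lambda>m. V m \<omega>)) \<in> borel_measurable F"
  unfolding Klin_def by (intro borel_measurable_sum mv_meas LNlin_meas) auto

lemma comp2_meas: "(\<lambda>h. h j i) \<in> borel_measurable (PiM (UNIV::nat set) (\<lambda>_. PiM (UNIV::nat set) (\<lambda>_. (borel :: 'b::topological_space measure))))"
  using measurable_compose[OF measurable_component_singleton[of j UNIV] measurable_component_singleton[of i UNIV]]
  by simp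

lemma comp1_meas: "(\<lambda>h. h j) \<in> borel_measurable (PiM (UNIV::nat set) (\<lambda>_. (borel :: 'b::topological_space measure)))"
  by (rule measurable_component_singleton) simp


context lqg
begin

abbreviation "SLN \<equiv> (PiM UNIV (\<lambda>_. borel) :: (nat \<Rightarrow> real^'n) measure)"
abbreviation "sLN \<equiv> sigLN Lt \<theta>"
abbreviation "sK \<equiv> sigK Kc Lt \<theta>"

lemma state_xs:
  "1 \<le> l \<Longrightarrow> (\<lambda>i. state A B C x1 w v sig \<gamma> i \<omega>) l = xf l \<omega> + cp A B l (\<lambda>m. control A B C x1 w v sig \<gamma> m \<omega>)"
  by (simp add: state_decomp)

lemma good_LN:
  assumes adm: "admissible SLN \<kappa> \<gamma>"
  shows "goodU (\<lambda>j \<omega>. control A B C x1 w v sLN \<gamma> j \<omega>)"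
  unfolding goodU_def
proof (intro allI impI)
  fix j0 k assume j0: "1 \<le> j0" "j0 \<le> k" and k: "k \<le> \<kappa>"
  let ?U = "\<lambda>j \<omega>. control A B C x1 w v sLN \<gamma> j \<omega>"
  have "1 \<le> j \<longrightarrow> j \<le> k \<longrightarrow> ?U j \<in> borel_measurable (SG k)" for j
  proof (induction j rule: less_induct)
    case (less j)
    show ?case
    proof (intro impI)
      assume j: "1 \<le> j" "j \<le> k"
      define H where "H \<omega> = (\<lambda>j'. if 1 \<le> j' \<and> j' \<le> j then (\<lambda>i. sf j' \<omega> i + LNlin Lt A B C j' (\<lambda>m. ?U m \<omega>) i) else undefined)" for \<omega>
      have eq: "?U j \<omega> = \<gamma> j (H \<omega>)" for \<omega>
      proof -
        have "sLN j' (ymeas C v (\<lambda>i. state A B C x1 w v sLN \<gamma> i \<omega>) \<omega> j') \<omega> =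
              (\<lambda>i. sf j' \<omega> i + LNlin Lt A B C j' (\<lambda>m. ?U m \<omega>) i)" if "1 \<le> j'" for j'
          using that by (intro sigLN_closed state_xs) auto
        then show ?thesis by (subst control_eq) (auto simp: H_def intro!: arg_cong[where f="\<gamma> j"])
      qed
      have Hc: "(\<lambda>\<omega>. H \<omega> j') \<in> measurable (SG k) SLN" for j'
      proof (cases "1 \<le> j' \<and> j' \<le> j")
        case True
        have "(\<lambda>\<omega> i. sf j' \<omega> i + LNlin Lt A B C j' (\<lambda>m. ?U m \<omega>) i) \<in> measurable (SG k) SLN"
        proof (rule measurable_PiM_single')
          fix i :: nat
          show "(\<lambda>\<omega>. sf j' \<omega> i + LNlin Lt A B C j' (\<lambda>m. ?U m \<omega>) i) \<in> borel_measurable (SG k)"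
            using True j less.IH by (intro borel_measurable_add sf_comp_SG LNlin_meas) auto
        qed (simp add: space_PiM)
        then show ?thesis using True by (simp add: H_def)
      next
        case False then have "\<And>\<omega>. H \<omega> j' = undefined" by (auto simp: H_def)
        then show ?thesis by (simp add: space_PiM)
      qed
      have Hm: "H \<in> measurable (SG k) (PiM UNIV (\<lambda>_. SLN))"
        using measurable_PiM_single'[of UNIV "\<lambda>j' \<omega>. H \<omega> j'" "SG k" "\<lambda>_. SLN"] Hc
        by (simp add: space_PiM)
      have gm: "\<gamma> j \<in> measurable (PiM UNIV (\<lambda>_. SLN)) borel"
        using adm j k by (simp add: admissible_def)
      have "(\<lambda>\<omega>. \<gamma> j (H \<omega>)) \<in> borel_measurable (SG k)"
        by (rule measurable_compose[OF Hm gm])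
      then show "?U j \<in> borel_measurable (SG k)" by (simp add: eq)
    qed
  qed
  then show "?U j0 \<in> borel_measurable (SG k)" using j0 by simp
qed

lemma good_K:
  assumes adm: "admissible borel \<kappa> \<gamma>"
  shows "goodU (\<lambda>j \<omega>. control A B C x1 w v sK \<gamma> j \<omega>)"
  unfolding goodU_def
proof (intro allI impI)
  fix j0 k assume j0: "1 \<le> j0" "j0 \<le> k" and k: "k \<le> \<kappa>"
  let ?U = "\<lambda>j \<omega>. control A B C x1 w v sK \<gamma> j \<omega>"
  have "1 \<le> j \<longrightarrow> j \<le> k \<longrightarrow> ?U j \<in> borel_measurable (SG k)" for j
  proof (induction j rule: less_induct)
    case (less j)
    show ?case
    proof (intro impI)
      assume j: "1 \<le> j" "j \<le> k"
      define H where "H \<omega> = (\<lambda>j'. if 1 \<le> j' \<and> j' \<le> j then ef j' \<omega> + Klin Kc Lt A B C j' (\<lambda>m. ?U m \<omega>) else undefined)" for \<omega>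
      have eq: "?U j \<omega> = \<gamma> j (H \<omega>)" for \<omega>
      proof -
        have "sK j' (ymeas C v (\<lambda>i. state A B C x1 w v sK \<gamma> i \<omega>) \<omega> j') \<omega> =
              ef j' \<omega> + Klin Kc Lt A B C j' (\<lambda>m. ?U m \<omega>)" for j'
          by (intro sigK_closed state_xs)
        then show ?thesis by (subst control_eq) (auto simp: H_def intro!: arg_cong[where f="\<gamma> j"])
      qed
      have Hc: "(\<lambda>\<omega>. H \<omega> j') \<in> borel_measurable (SG k)" for j'
      proof (cases "1 \<le> j' \<and> j' \<le> j")
        case True
        have "(\<lambda>\<omega>. ef j' \<omega> + Klin Kc Lt A B C j' (\<lambda>m. ?U m \<omega>)) \<in> borel_measurable (SG k)"
          using True j less.IH by (intro borel_measurable_add ef_SG Klin_meas) auto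
        then show ?thesis using True by (simp add: H_def)
      next
        case False then have "\<And>\<omega>. H \<omega> j' = undefined" by (auto simp: H_def)
        then show ?thesis by simp
      qed
      have Hm: "H \<in> measurable (SG k) (PiM UNIV (\<lambda>_. borel))"
        using measurable_PiM_single'[of UNIV "\<lambda>j' \<omega>. H \<omega> j'" "SG k" "\<lambda>_. borel"] Hc
        by (simp add: space_PiM)
      have gm: "\<gamma> j \<in> measurable (PiM UNIV (\<lambda>_. borel)) borel"
        using adm j k by (simp add: admissible_def)
      have "(\<lambda>\<omega>. \<gamma> j (H \<omega>)) \<in> borel_measurable (SG k)"
        by (rule measurable_compose[OF Hm gm])
      then show "?U j \<in> borel_measurable (SG k)" by (simp add: eq)
    qed
  qed
  then show "?U j0 \<in> borel_measurable (SG k)" using j0 by simp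
qed

end


context lqg
begin

definition stepLN :: "nat \<Rightarrow> (nat \<Rightarrow> real^'r) \<Rightarrow> (nat \<Rightarrow> nat \<Rightarrow> real^'n) \<Rightarrow> real^'r" where
  "stepLN k V h = - (Kk k *v ((\<Sum>j\<in>{1..k}. \<Sum>i\<in>{1..j}. Kc k j i *v (h j i - LNlin Lt A B C j V i)) + cp A B k V))"

definition stepK :: "nat \<Rightarrow> (nat \<Rightarrow> real^'r) \<Rightarrow> (nat \<Rightarrow> real^'m) \<Rightarrow> real^'r" where
  "stepK k V h = (if k = 0 then 0 else - (Kk k *v ((h k - Klin Kc Lt A B C k V) + cp A B k V)))"

definition "gLN = (\<lambda>k h. useq stepLN k h k)"
definition "gK = (\<lambda>k h. useq stepK k h k)"

lemma stepLN_F1: "(\<And>m. 1 \<le> m \<Longrightarrow> m < k \<Longrightarrow> V m = V' m) \<Longrightarrow> stepLN k V h = stepLN k V' h"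
proof -
  assume a: "\<And>m. 1 \<le> m \<Longrightarrow> m < k \<Longrightarrow> V m = V' m"
  have "LNlin Lt A B C j V = LNlin Lt A B C j V'" if "j \<le> k" for j
    using a that by (intro LNlin_cong1) auto
  moreover have "cp A B k V = cp A B k V'" using a by (intro cp_cong1) auto
  ultimately show ?thesis unfolding stepLN_def by (intro arg_cong[where f="\<lambda>z. - (Kk k *v z)"]) auto
qed

lemma stepLN_F2: "(\<And>j. 1 \<le> j \<Longrightarrow> j \<le> k \<Longrightarrow> h j = h' j) \<Longrightarrow> stepLN k V h = stepLN k V h'"
  unfolding stepLN_def by (intro arg_cong[where f="\<lambda>z. - (Kk k *v (z + _))"] sum.cong refl) auto

lemma stepK_F1: "(\<And>m. 1 \<le> m \<Longrightarrow> m < k \<Longrightarrow> V m = V' m) \<Longrightarrow> stepK k V h = stepK k V' h"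
proof -
  assume a: "\<And>m. 1 \<le> m \<Longrightarrow> m < k \<Longrightarrow> V m = V' m"
  have "Klin Kc Lt A B C k V = Klin Kc Lt A B C k V'" using a by (intro Klin_cong1) auto
  moreover have "cp A B k V = cp A B k V'" using a by (intro cp_cong1) auto
  ultimately show ?thesis unfolding stepK_def by simp
qed

lemma stepK_F2: "(\<And>j. 1 \<le> j \<Longrightarrow> j \<le> k \<Longrightarrow> h j = h' j) \<Longrightarrow> stepK k V h = stepK k V h'"
proof -
  assume a: "\<And>j. 1 \<le> j \<Longrightarrow> j \<le> k \<Longrightarrow> h j = h' j"
  show ?thesis
  proof (cases "k = 0")
    case True then show ?thesis by (simp add: stepK_def Klin_def)
  next
    case False then show ?thesis using a[of k] by (simp add: stepK_def)
  qed
qed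

lemma stepLN_F3:
  "(\<And>m. V m \<in> borel_measurable (PiM UNIV (\<lambda>_. SLN))) \<Longrightarrow> (\<lambda>h. stepLN k (\<lambda>m. V m h) h) \<in> borel_measurable (PiM UNIV (\<lambda>_. SLN))"
  unfolding stepLN_def
  by (intro borel_measurable_uminus mv_meas borel_measurable_add borel_measurable_sum borel_measurable_diff
       comp2_meas LNlin_meas cp_meas) auto

lemma stepK_F3:
  "(\<And>m. V m \<in> borel_measurable (PiM UNIV (\<lambda>_. borel))) \<Longrightarrow> (\<lambda>h. stepK k (\<lambda>m. V m h) h) \<in> borel_measurable (PiM UNIV (\<lambda>_. (borel :: (real^'m) measure)))"
proof (cases "k = 0")
  case True then show ?thesis by (simp add: stepK_def)
next
  case False
  assume a: "\<And>m. V m \<in> borel_measurable (PiM UNIV (\<lambda>_. borel))"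
  have "(\<lambda>h. - (Kk k *v ((h k - Klin Kc Lt A B C k (\<lambda>m. V m h)) + cp A B k (\<lambda>m. V m h))))
      \<in> borel_measurable (PiM UNIV (\<lambda>_. (borel :: (real^'m) measure)))"
    using a by (intro borel_measurable_uminus mv_meas borel_measurable_add borel_measurable_diff
       comp1_meas Klin_meas cp_meas) auto
  then show ?thesis using False by (simp add: stepK_def)
qed

lemma adm_gLN: "admissible SLN \<kappa> gLN"
proof -
  have "(\<lambda>h. useq stepLN k h m) \<in> borel_measurable (PiM UNIV (\<lambda>_. SLN))" for k m
    by (rule useq_meas) (rule stepLN_F3)
  then show ?thesis unfolding admissible_def gLN_def by blast
qed

lemma adm_gK: "admissible borel \<kappa> gK"
proof -
  have "(\<lambda>h. useq stepK k h m) \<in> borel_measurable (PiM UNIV (\<lambda>_. (borel :: (real^'m) measure)))" for k m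
    by (rule useq_meas) (rule stepK_F3)
  then show ?thesis unfolding admissible_def gK_def by blast
qed

lemma rec_gLN:
  assumes k: "1 \<le> k"
  shows "ak (\<lambda>j \<omega>. control A B C x1 w v sLN gLN j \<omega>) k \<omega> = 0"
proof -
  let ?U = "\<lambda>j \<omega>. control A B C x1 w v sLN gLN j \<omega>"
  have c: "?U k \<omega> = stepLN k (\<lambda>m. ?U m \<omega>)
       (\<lambda>j. if 1 \<le> j \<and> j \<le> k then sLN j (ymeas C v (\<lambda>i. state A B C x1 w v sLN gLN i \<omega>) \<omega> j) \<omega> else undefined)"
    unfolding gLN_def by (rule gstar_closed[OF stepLN_F1 stepLN_F2 k])
  have "sLN j (ymeas C v (\<lambda>i. state A B C x1 w v sLN gLN i \<omega>) \<omega> j) \<omega> =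
        (\<lambda>i. sf j \<omega> i + LNlin Lt A B C j (\<lambda>m. ?U m \<omega>) i)" if "1 \<le> j" for j
    using that by (intro sigLN_closed state_xs) auto
  then have "(\<Sum>j\<in>{1..k}. \<Sum>i\<in>{1..j}. Kc k j i *v
       ((\<lambda>j. if 1 \<le> j \<and> j \<le> k then sLN j (ymeas C v (\<lambda>i. state A B C x1 w v sLN gLN i \<omega>) \<omega> j) \<omega> else undefined) j i
        - LNlin Lt A B C j (\<lambda>m. ?U m \<omega>) i)) = ef k \<omega>"
    unfolding etafree_def by (intro sum.cong refl) auto
  then have "?U k \<omega> = - (Kk k *v (ef k \<omega> + cp A B k (\<lambda>j. ?U j \<omega>)))"
    using c unfolding stepLN_def by simp
  then show ?thesis by (simp only: ak_zero_iff)
qed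

lemma rec_gK:
  assumes k: "1 \<le> k"
  shows "ak (\<lambda>j \<omega>. control A B C x1 w v sK gK j \<omega>) k \<omega> = 0"
proof -
  let ?U = "\<lambda>j \<omega>. control A B C x1 w v sK gK j \<omega>"
  have c: "?U k \<omega> = stepK k (\<lambda>m. ?U m \<omega>)
       (\<lambda>j. if 1 \<le> j \<and> j \<le> k then sK j (ymeas C v (\<lambda>i. state A B C x1 w v sK gK i \<omega>) \<omega> j) \<omega> else undefined)"
    unfolding gK_def by (rule gstar_closed[OF stepK_F1 stepK_F2 k])
  have "sK k (ymeas C v (\<lambda>i. state A B C x1 w v sK gK i \<omega>) \<omega> k) \<omega> = ef k \<omega> + Klin Kc Lt A B C k (\<lambda>m. ?U m \<omega>)"
    by (intro sigK_closed state_xs)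
  then have "?U k \<omega> = - (Kk k *v (ef k \<omega> + cp A B k (\<lambda>j. ?U j \<omega>)))"
    using c k unfolding stepK_def by simp
  then show ?thesis by (simp only: ak_zero_iff)
qed

lemma UC_gLN: "UC M A B C x1 w v \<kappa> sLN Q R gLN = ennreal C0"
  by (rule UC_attain[OF good_LN[OF adm_gLN] rec_gLN]) simp

lemma UC_gK: "UC M A B C x1 w v \<kappa> sK Q R gK = ennreal C0"
  by (rule UC_attain[OF good_K[OF adm_gK] rec_gK]) simp

lemma best_gLN: "best_response M A B C x1 w v \<kappa> SLN sLN Q R gLN"
  unfolding best_response_def using adm_gLN UC_gLN UC_lower[OF good_LN] by auto

lemma best_gK: "best_response M A B C x1 w v \<kappa> borel sK Q R gK"
  unfolding best_response_def using adm_gK UC_gK UC_lower[OF good_K] by auto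

lemma best_LN_rec:
  assumes "best_response M A B C x1 w v \<kappa> SLN sLN Q R \<gamma>"
  shows "AE \<omega> in M. \<forall>k\<in>{1..\<kappa>}. ak (\<lambda>j \<omega>. control A B C x1 w v sLN \<gamma> j \<omega>) k \<omega> = 0"
proof -
  have adm: "admissible SLN \<kappa> \<gamma>" using assms by (simp add: best_response_def)
  have "UC M A B C x1 w v \<kappa> sLN Q R \<gamma> \<le> ennreal C0"
    using assms adm_gLN UC_gLN by (auto simp: best_response_def)
  then show ?thesis by (rule UC_opt[OF good_LN[OF adm]])
qed

lemma best_K_rec:
  assumes "best_response M A B C x1 w v \<kappa> borel sK Q R \<gamma>"
  shows "AE \<omega> in M. \<forall>k\<in>{1..\<kappa>}. ak (\<lambda>j \<omega>. control A B C x1 w v sK \<gamma> j \<omega>) k \<omega> = 0"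
proof -
  have adm: "admissible borel \<kappa> \<gamma>" using assms by (simp add: best_response_def)
  have "UC M A B C x1 w v \<kappa> sK Q R \<gamma> \<le> ennreal C0"
    using assms adm_gK UC_gK by (auto simp: best_response_def)
  then show ?thesis by (rule UC_opt[OF good_K[OF adm]])
qed

lemma best_pair_AE:
  assumes "best_response M A B C x1 w v \<kappa> borel sK Q R \<gamma>"
    and "best_response M A B C x1 w v \<kappa> SLN sLN Q R \<gamma>'"
  shows "AE \<omega> in M. \<forall>k\<in>{1..\<kappa>}. control A B C x1 w v sK \<gamma> k \<omega> = control A B C x1 w v sLN \<gamma>' k \<omega>"
  using best_K_rec[OF assms(1)] best_LN_rec[OF assms(2)]
  by eventually_elim (rule rec_unique)

end


lemma per_type:
  assumes base: "lqg_base M A C x1 w v Lt \<theta> Kc \<kappa>" and Q: "psd_mat Q" and R: "pd_mat R"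
  shows "\<exists>\<gamma>. best_response M A B C x1 w v \<kappa> borel (sigK Kc Lt \<theta>) Q R \<gamma>"
    "\<exists>\<gamma>. best_response M A B C x1 w v \<kappa> (PiM UNIV (\<lambda>_. borel)) (sigLN Lt \<theta>) Q R \<gamma>"
    "best_response M A B C x1 w v \<kappa> borel (sigK Kc Lt \<theta>) Q R \<gamma> \<Longrightarrow>
     best_response M A B C x1 w v \<kappa> (PiM UNIV (\<lambda>_. borel)) (sigLN Lt \<theta>) Q R \<gamma>' \<Longrightarrow>
     AE \<omega> in M. \<forall>k\<in>{1..\<kappa>}. control A B C x1 w v (sigK Kc Lt \<theta>) \<gamma> k \<omega> = control A B C x1 w v (sigLN Lt \<theta>) \<gamma>' k \<omega>"
proof -
  interpret lqg M A B C x1 w v Lt \<theta> Kc \<kappa> Q R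
    by (intro lqg.intro base ric.intro Q R)
  show "\<exists>\<gamma>. best_response M A B C x1 w v \<kappa> borel (sigK Kc Lt \<theta>) Q R \<gamma>"
    using best_gK by blast
  show "\<exists>\<gamma>. best_response M A B C x1 w v \<kappa> (PiM UNIV (\<lambda>_. borel)) (sigLN Lt \<theta>) Q R \<gamma>"
    using best_gLN by blast
  show "best_response M A B C x1 w v \<kappa> borel (sigK Kc Lt \<theta>) Q R \<gamma> \<Longrightarrow>
     best_response M A B C x1 w v \<kappa> (PiM UNIV (\<lambda>_. borel)) (sigLN Lt \<theta>) Q R \<gamma>' \<Longrightarrow>
     AE \<omega> in M. \<forall>k\<in>{1..\<kappa>}. control A B C x1 w v (sigK Kc Lt \<theta>) \<gamma> k \<omega> = control A B C x1 w v (sigLN Lt \<theta>) \<gamma>' k \<omega>"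
    by (rule best_pair_AE)
qed

theorem lemma2:
  fixes M :: "'a measure"
    and A :: "real^'m^'m" and B :: "real^'r^'m" and C :: "real^'m^'n"
    and x1 :: "'a \<Rightarrow> real^'m" and w :: "nat \<Rightarrow> 'a \<Rightarrow> real^'m" and v :: "nat \<Rightarrow> 'a \<Rightarrow> real^'n"
    and \<Sigma>1 \<Sigma>w :: "real^'m^'m" and \<Sigma>v :: "real^'n^'n"
    and \<kappa> :: nat
    and Om :: "'t set" and wo :: 't
    and Q :: "'t \<Rightarrow> real^'m^'m" and R :: "'t \<Rightarrow> real^'r^'r"
    and Lt :: "nat \<Rightarrow> nat \<Rightarrow> nat \<Rightarrow> real^'n^'n"
    and \<theta> :: "nat \<Rightarrow> 'a \<Rightarrow> nat \<Rightarrow> real^'n"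
    and Kc :: "nat \<Rightarrow> nat \<Rightarrow> nat \<Rightarrow> real^'n^'m"
  assumes "prob_space M"
    and "centered_gaussian_vec M x1" "has_cov M x1 \<Sigma>1"
    and "\<And>k. centered_gaussian_vec M (w k)" "\<And>k. has_cov M (w k) \<Sigma>w"
    and "\<And>k. centered_gaussian_vec M (v k)" "\<And>k. has_cov M (v k) \<Sigma>v"
    and "\<And>k. centered_gaussian_block M k (\<theta> k)"
    and "prob_space.indep_sets M (prim_sets M x1 w v \<theta>) UNIV"
    and "finite Om" "wo \<notin> Om"
    and "\<And>t. t \<in> insert wo Om \<Longrightarrow> psd_mat (Q t)"
    and "\<And>t. t \<in> insert wo Om \<Longrightarrow> pd_mat (R t)"
    and condexp: "\<And>k. k \<in> {1..\<kappa>} \<Longrightarrow> AE \<omega> in M. \<forall>c.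
        (\<Sum>j\<in>{1..k}. \<Sum>i\<in>{1..j}. Kc k j i *v sfree A C x1 w v Lt \<theta> j \<omega> i) $ c
          = real_cond_exp M (sig_gen M A C x1 w v Lt \<theta> k) (\<lambda>\<omega>'. xfree A x1 w k \<omega>' $ c) \<omega>"
  shows "(\<forall>t\<in>insert wo Om.
            ((\<exists>\<gamma>. best_response M A B C x1 w v \<kappa> borel (sigK Kc Lt \<theta>) (Q t) (R t) \<gamma>)
              \<longleftrightarrow> (\<exists>\<gamma>. best_response M A B C x1 w v \<kappa> (PiM UNIV (\<lambda>_. borel)) (sigLN Lt \<theta>) (Q t) (R t) \<gamma>))
          \<and> (\<forall>\<gamma> \<gamma>'. best_response M A B C x1 w v \<kappa> borel (sigK Kc Lt \<theta>) (Q t) (R t) \<gamma>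
                 \<longrightarrow> best_response M A B C x1 w v \<kappa> (PiM UNIV (\<lambda>_. borel)) (sigLN Lt \<theta>) (Q t) (R t) \<gamma>'
                 \<longrightarrow> (\<forall>k\<in>{1..\<kappa>}. AE \<omega> in M.
                        control A B C x1 w v (sigK Kc Lt \<theta>) \<gamma> k \<omega>
                        = control A B C x1 w v (sigLN Lt \<theta>) \<gamma>' k \<omega>)))
        \<and> (\<forall>Gam Gam'.
            (\<forall>t\<in>insert wo Om. best_response M A B C x1 w v \<kappa> borel (sigK Kc Lt \<theta>) (Q t) (R t) (Gam t))
            \<longrightarrow> (\<forall>t\<in>insert wo Om. best_response M A B C x1 w v \<kappa> (PiM UNIV (\<lambda>_. borel)) (sigLN Lt \<theta>) (Q t) (R t) (Gam' t))
            \<longrightarrow> US M A B C x1 w v \<kappa> (sigK Kc Lt \<theta>) Om wo Q R Gam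
                = US M A B C x1 w v \<kappa> (sigLN Lt \<theta>) Om wo Q R Gam')"
proof -
  have base: "lqg_base M A C x1 w v Lt \<theta> Kc \<kappa>"
    unfolding lqg_base_def lqg_base_axioms_def
    using assms by (simp add: sig_gen_def)
  have AEt: "AE \<omega> in M. \<forall>k\<in>{1..\<kappa>}. control A B C x1 w v (sigK Kc Lt \<theta>) \<gamma> k \<omega> = control A B C x1 w v (sigLN Lt \<theta>) \<gamma>' k \<omega>"
    if "t \<in> insert wo Om" "best_response M A B C x1 w v \<kappa> borel (sigK Kc Lt \<theta>) (Q t) (R t) \<gamma>"
      "best_response M A B C x1 w v \<kappa> (PiM UNIV (\<lambda>_. borel)) (sigLN Lt \<theta>) (Q t) (R t) \<gamma>'" for t \<gamma> \<gamma>'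
    using per_type(3)[OF base assms(12)[OF that(1)] assms(13)[OF that(1)] that(2,3)] .
  have part1: "\<forall>t\<in>insert wo Om.
            ((\<exists>\<gamma>. best_response M A B C x1 w v \<kappa> borel (sigK Kc Lt \<theta>) (Q t) (R t) \<gamma>)
              \<longleftrightarrow> (\<exists>\<gamma>. best_response M A B C x1 w v \<kappa> (PiM UNIV (\<lambda>_. borel)) (sigLN Lt \<theta>) (Q t) (R t) \<gamma>))
          \<and> (\<forall>\<gamma> \<gamma>'. best_response M A B C x1 w v \<kappa> borel (sigK Kc Lt \<theta>) (Q t) (R t) \<gamma>
                 \<longrightarrow> best_response M A B C x1 w v \<kappa> (PiM UNIV (\<lambda>_. borel)) (sigLN Lt \<theta>) (Q t) (R t) \<gamma>'
                 \<longrightarrow> (\<forall>k\<in>{1..\<kappa>}. AE \<omega> in M.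
                        control A B C x1 w v (sigK Kc Lt \<theta>) \<gamma> k \<omega>
                        = control A B C x1 w v (sigLN Lt \<theta>) \<gamma>' k \<omega>))"
  proof (intro ballI conjI allI impI)
    fix t assume t: "t \<in> insert wo Om"
    show "(\<exists>\<gamma>. best_response M A B C x1 w v \<kappa> borel (sigK Kc Lt \<theta>) (Q t) (R t) \<gamma>)
              \<longleftrightarrow> (\<exists>\<gamma>. best_response M A B C x1 w v \<kappa> (PiM UNIV (\<lambda>_. borel)) (sigLN Lt \<theta>) (Q t) (R t) \<gamma>)"
      using per_type(1,2)[OF base assms(12)[OF t] assms(13)[OF t]] by blast
    fix \<gamma> \<gamma>' k
    assume b1: "best_response M A B C x1 w v \<kappa> borel (sigK Kc Lt \<theta>) (Q t) (R t) \<gamma>"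
      and b2: "best_response M A B C x1 w v \<kappa> (PiM UNIV (\<lambda>_. borel)) (sigLN Lt \<theta>) (Q t) (R t) \<gamma>'"
      and k: "k \<in> {1..\<kappa>}"
    from AEt[OF t b1 b2] show "AE \<omega> in M. control A B C x1 w v (sigK Kc Lt \<theta>) \<gamma> k \<omega>
                        = control A B C x1 w v (sigLN Lt \<theta>) \<gamma>' k \<omega>"
      by eventually_elim (use k in blast)
  qed
  have part2: "\<forall>Gam Gam'.
            (\<forall>t\<in>insert wo Om. best_response M A B C x1 w v \<kappa> borel (sigK Kc Lt \<theta>) (Q t) (R t) (Gam t))
            \<longrightarrow> (\<forall>t\<in>insert wo Om. best_response M A B C x1 w v \<kappa> (PiM UNIV (\<lambda>_. borel)) (sigLN Lt \<theta>) (Q t) (R t) (Gam' t))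
            \<longrightarrow> US M A B C x1 w v \<kappa> (sigK Kc Lt \<theta>) Om wo Q R Gam
                = US M A B C x1 w v \<kappa> (sigLN Lt \<theta>) Om wo Q R Gam'"
  proof (intro allI impI)
    fix Gam Gam'
    assume G: "\<forall>t\<in>insert wo Om. best_response M A B C x1 w v \<kappa> borel (sigK Kc Lt \<theta>) (Q t) (R t) (Gam t)"
      and G': "\<forall>t\<in>insert wo Om. best_response M A B C x1 w v \<kappa> (PiM UNIV (\<lambda>_. borel)) (sigLN Lt \<theta>) (Q t) (R t) (Gam' t)"
    have ae: "AE \<omega> in M. \<forall>k\<in>{1..\<kappa>}. control A B C x1 w v (sigK Kc Lt \<theta>) (Gam t) k \<omega> = control A B C x1 w v (sigLN Lt \<theta>) (Gam' t) k \<omega>"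
      if "t \<in> insert wo Om" for t
      using AEt[OF that] G G' that by blast
    have sc: "state_cost M A B C x1 w v \<kappa> (sigK Kc Lt \<theta>) (Q wo) (Gam t) = state_cost M A B C x1 w v \<kappa> (sigLN Lt \<theta>) (Q wo) (Gam' t)"
      if "t \<in> Om" for t
      using that by (intro cost_cong(1) ae) simp
    have uc: "UC M A B C x1 w v \<kappa> (sigK Kc Lt \<theta>) (Q wo) (R wo) (Gam wo) = UC M A B C x1 w v \<kappa> (sigLN Lt \<theta>) (Q wo) (R wo) (Gam' wo)"
      by (intro cost_cong(3) ae) simp
    show "US M A B C x1 w v \<kappa> (sigK Kc Lt \<theta>) Om wo Q R Gam = US M A B C x1 w v \<kappa> (sigLN Lt \<theta>) Om wo Q R Gam'"
      unfolding US_def by (intro SUP_cong refl arg_cong2[where f="(+)"] sum.cong arg_cong[where f="\<lambda>z. _ * z"] sc uc)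
  qed
  show ?thesis using part1 part2 by blast
qed

end
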